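(* Let $n\ge 2$ be an integer. For $i=1,2$ let $X_{i1},\dots,X_{in}$ be a random sample from the density $\frac{1}{\sigma}e^{-(x-\mu_i)/\sigma}$, $x\ge\mu_i$, the two samples independent, $\underline{\theta}=(\mu_1,\mu_2,\sigma)\in\mathbb{R}^2\times(0,\infty)$. Let $X_i=\min_jX_{ij}$, $S=\sum_{i=1}^2\sum_{j=1}^n(X_{ij}-X_i)$, $Z_1=\min\{X_1,X_2\}$, $Z_2=\max\{X_1,X_2\}$, $W=\frac{Z_2-Z_1}{S}$, $V=\frac{S}{\sigma}$, $\mu_S=\mu_1I(X_1\le X_2)+\mu_2I(X_2<X_1)$, $U_1=\frac{Z_1-\mu_S}{\sigma}$, and $\mu=n(\max\{\mu_1,\mu_2\}-\min\{\mu_1,\mu_2\})/\sigma$. Let $f_{1,\underline{\theta}}$ denote the probability density function of $W$. Then for each fixed $w\in(0,\infty)$, the conditional density of $(U_1,V)$ given $W=w$ is $$f_{4,\underline{\theta}}(u,v\mid w)=\begin{cases}\dfrac{n^2}{\Gamma(2(n-1))f_{1,\underline{\theta}}(w)}v^{2n-2}e^{-v(1+nw)}e^{-2nu}\left(e^{-\mu}+e^{\mu}\right), & \text{if } 0<u<\tfrac{\mu}{n},\ \tfrac{\mu-nu}{nw}<v<\infty,\ \text{or } \tfrac{\mu}{n}<u<\infty,\ 0<v<\infty,\\[2mm] \dfrac{n^2}{\Gamma(2(n-1))f_{1,\underline{\theta}}(w)}v^{2n-2}e^{-v(1+nw)}e^{-2nu}e^{-\mu}, & \text{if } 0<u<\tfrac{\mu}{n},\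 0<v<\tfrac{\mu-nu}{nw},\end{cases}$$ and $0$ otherwise.
   Context: $I(A)$ is the indicator of $A$; $\Gamma$ is the gamma function. *)

theory Defs
  imports "HOL-Probability.Probability"
begin

definition shifted_exp_density :: "real \<Rightarrow> real \<Rightarrow> real \<Rightarrow> real" where
  "shifted_exp_density m s x = (if x \<ge> m then exp (-(x - m) / s) / s else 0)"

definition conditional_density ::
  "'a measure \<Rightarrow> ('a \<Rightarrow> 'b::euclidean_space) \<Rightarrow> ('a \<Rightarrow> real) \<Rightarrow> (real \<Rightarrow> real)
    \<Rightarrow> ('b \<Rightarrow> real \<Rightarrow> real) \<Rightarrow> bool" where
  "conditional_density M Y W fW g \<longleftrightarrow>
     distributed M lborel (\<lambda>\<omega>. (Y \<omega>, W \<omega>)) (\<lambda>(y, w). ennreal (g y w * fW w))"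

definition f4 :: "nat \<Rightarrow> real \<Rightarrow> (real \<Rightarrow> real) \<Rightarrow> real \<Rightarrow> real \<Rightarrow> real \<Rightarrow> real" where
  "f4 n mu f1 u v w =
    (if w > 0 then
       (let c = real n ^ 2 / (Gamma (2 * (real n - 1)) * f1 w) * v ^ (2 * n - 2)
                * exp (- v * (1 + real n * w)) * exp (- 2 * real n * u)
        in if (0 < u \<and> u < mu / real n \<and> (mu - real n * u) / (real n * w) < v)
              \<or> (mu / real n < u \<and> 0 < v)
           then c * (exp (- mu) + exp mu)
           else if 0 < u \<and> u < mu / real n \<and> 0 < v \<and> v < (mu - real n * u) / (real n * w)
           then c * exp (- mu)
           else 0)
     else 0)"

end

theory Submission
  imports Defs "HOL-Probability.Probability"
begin

definition sexp :: "real \<Rightarrow> real \<Rightarrow> real \<Rightarrow> real" where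
  "sexp m r x = (if m \<le> x then r * exp (- (r * (x - m))) else 0)"

lemma sexp_measurable[measurable]: "sexp m r \<in> borel_measurable borel"
  unfolding sexp_def[abs_def] by measurable

lemma sexp_nonneg: "r \<ge> 0 \<Longrightarrow> sexp m r x \<ge> 0"
  by (simp add: sexp_def)

definition Tint :: "real \<Rightarrow> nat \<Rightarrow> (real \<Rightarrow> ennreal) \<Rightarrow> ennreal" where
  "Tint r k h = (if k \<le> 1 then h 0 else \<integral>\<^sup>+t. ennreal (erlang_density (k-2) r t) * h t \<partial>lborel)"

lemma Tint_measurable[measurable]:
  assumes [measurable]: "(\<lambda>(x, t). g x t) \<in> borel_measurable (N \<Otimes>\<^sub>M borel)"
  shows "(\<lambda>x. Tint r k (g x)) \<in> borel_measurable N"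
  unfolding Tint_def by measurable

lemma Tint_cmult:
  assumes [measurable]: "h \<in> borel_measurable borel"
  shows "Tint r k (\<lambda>t. c * h t) = c * Tint r k h"
  unfolding Tint_def
  by (auto simp: nn_integral_cmult[symmetric] mult.assoc mult.left_commute intro!: nn_integral_cong)

lemma Tint_add:
  assumes [measurable]: "h1 \<in> borel_measurable borel" "h2 \<in> borel_measurable borel"
  shows "Tint r k (\<lambda>t. h1 t + h2 t) = Tint r k h1 + Tint r k h2"
  unfolding Tint_def
  by (auto simp: nn_integral_add[symmetric] distrib_left intro!: nn_integral_cong)

lemma Tint_swap:
  assumes [measurable]: "(\<lambda>(t, y). F t y) \<in> borel_measurable (borel \<Otimes>\<^sub>M borel)"
  shows "Tint r k (\<lambda>t. \<integral>\<^sup>+y. F t y \<partial>lborel) = (\<integral>\<^sup>+y. Tint r k (\<lambda>t. F t y) \<partial>lborel)"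
proof (cases "k \<le> 1")
  case True then show ?thesis by (simp add: Tint_def)
next
  case False
  have "Tint r k (\<lambda>t. \<integral>\<^sup>+y. F t y \<partial>lborel) =
    (\<integral>\<^sup>+t. \<integral>\<^sup>+y. ennreal (erlang_density (k-2) r t) * F t y \<partial>lborel \<partial>lborel)"
    using False by (simp add: Tint_def nn_integral_cmult)
  also have "\<dots> = (\<integral>\<^sup>+y. \<integral>\<^sup>+t. ennreal (erlang_density (k-2) r t) * F t y \<partial>lborel \<partial>lborel)"
    by (rule lborel_pair.Fubini') measurable
  also have "\<dots> = (\<integral>\<^sup>+y. Tint r k (\<lambda>t. F t y) \<partial>lborel)"
    using False by (simp add: Tint_def)
  finally show ?thesis .
qed

lemma Tint_conv:
  assumes r: "r > 0" and k: "k \<ge> 1" and [measurable]: "h \<in> borel_measurable borel"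
  shows "Tint r k (\<lambda>t. \<integral>\<^sup>+z. ennreal (erlang_density 0 r z) * h (t + z) \<partial>lborel) = Tint r (Suc k) h"
proof (cases "k = 1")
  case True then show ?thesis by (simp add: Tint_def)
next
  case False
  then have k2: "k \<ge> 2" using k by simp
  have "Tint r k (\<lambda>t. \<integral>\<^sup>+z. ennreal (erlang_density 0 r z) * h (t + z) \<partial>lborel) =
     (\<integral>\<^sup>+t. ennreal (erlang_density (k-2) r t) * (\<integral>\<^sup>+z. ennreal (erlang_density 0 r z) * h (t + z) \<partial>lborel) \<partial>lborel)"
    using k2 by (simp add: Tint_def)
  also have "\<dots> = (\<integral>\<^sup>+t. ennreal (erlang_density (k-2) r t) * (\<integral>\<^sup>+s. ennreal (erlang_density 0 r (s - t)) * h s \<partial>lborel) \<partial>lborel)"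
  proof -
    have aff: "(\<integral>\<^sup>+z. ennreal (erlang_density 0 r z) * h (t + z) \<partial>lborel) = (\<integral>\<^sup>+s. ennreal (erlang_density 0 r (s - t)) * h s \<partial>lborel)" for t
    proof -
      have m: "(\<lambda>s. ennreal (erlang_density 0 r (s - t)) * h s) \<in> borel_measurable borel" by measurable
      show ?thesis using nn_integral_real_affine[OF m, of 1 t] by simp
    qed
    show ?thesis by (simp add: aff)
  qed
  also have "\<dots> = (\<integral>\<^sup>+t. \<integral>\<^sup>+s. ennreal (erlang_density (k-2) r t) * ennreal (erlang_density 0 r (s - t)) * h s \<partial>lborel \<partial>lborel)"
    by (simp add: nn_integral_cmult mult.assoc)
  also have "\<dots> = (\<integral>\<^sup>+s. \<integral>\<^sup>+t. ennreal (erlang_density (k-2) r t) * ennreal (erlang_density 0 r (s - t)) * h s \<partial>lborel \<partial>lborel)"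
    by (rule lborel_pair.Fubini') measurable
  also have "\<dots> = (\<integral>\<^sup>+s. (\<integral>\<^sup>+t. ennreal (erlang_density 0 r (s - t)) * ennreal (erlang_density (k-2) r t) \<partial>lborel) * h s \<partial>lborel)"
  proof -
    have "(\<integral>\<^sup>+t. ennreal (erlang_density 0 r (s - t)) * ennreal (erlang_density (k-2) r t) * h s \<partial>lborel) =
      (\<integral>\<^sup>+t. ennreal (erlang_density 0 r (s - t)) * ennreal (erlang_density (k-2) r t) \<partial>lborel) * h s" for s
      by (rule nn_integral_multc) measurable
    then show ?thesis by (simp add: mult_ac)
  qed
  also have "\<dots> = (\<integral>\<^sup>+s. ennreal (erlang_density (k-1) r s) * h s \<partial>lborel)"
  proof -
    have "(\<lambda>x. \<integral>\<^sup>+y. ennreal (erlang_density 0 r (x - y)) * ennreal (erlang_density (k-2) r y) \<partial>lborel) =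
      erlang_density (Suc 0 + Suc (k-2) - 1) r"
      by (rule convolution_erlang_density[OF r])
    moreover have "Suc 0 + Suc (k-2) - 1 = k - 1" using k2 by simp
    ultimately show ?thesis by (simp add: fun_eq_iff)
  qed
  also have "\<dots> = Tint r (Suc k) h" using k2 by (simp add: Tint_def)
  finally show ?thesis .
qed

lemma exp_combine:
  fixes k r m \<mu> :: real
  shows "k * r * exp (- (k * r * (m - \<mu>))) * exp (- (r * (m - \<mu>))) +
         r * exp (- (r * (m - \<mu>))) * exp (- (k * r * (m - \<mu>))) =
         (k + 1) * r * exp (- ((k + 1) * r * (m - \<mu>)))"
proof -
  have "exp (- ((k + 1) * r * (m - \<mu>))) = exp (- (k * r * (m - \<mu>))) * exp (- (r * (m - \<mu>)))"
    by (simp add: exp_add[symmetric] algebra_simps)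
  then show ?thesis by (simp add: algebra_simps)
qed

lemma step_A1:
  assumes r: "r > 0" and m: "\<mu> \<le> m" and [measurable]: "h \<in> borel_measurable borel"
  shows "(\<integral>\<^sup>+y. ennreal (sexp \<mu> r y) * indicator {m..} y * h (y - m) \<partial>lborel) =
    ennreal (exp (- (r * (m - \<mu>)))) * (\<integral>\<^sup>+z. ennreal (erlang_density 0 r z) * h z \<partial>lborel)"
proof -
  have mf: "(\<lambda>y. ennreal (sexp \<mu> r y) * indicator {m..} y * h (y - m)) \<in> borel_measurable borel"
    by measurable
  have "(\<integral>\<^sup>+y. ennreal (sexp \<mu> r y) * indicator {m..} y * h (y - m) \<partial>lborel) =
     (\<integral>\<^sup>+z. ennreal (sexp \<mu> r (m + z)) * indicator {m..} (m + z) * h (m + z - m) \<partial>lborel)"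
    using nn_integral_real_affine[OF mf, of 1 m] by simp
  also have "\<dots> = (\<integral>\<^sup>+z. ennreal (exp (- (r * (m - \<mu>)))) * (ennreal (erlang_density 0 r z) * h z) \<partial>lborel)"
  proof (intro nn_integral_cong)
    fix z :: real
    show "ennreal (sexp \<mu> r (m + z)) * indicator {m..} (m + z) * h (m + z - m) =
       ennreal (exp (- (r * (m - \<mu>)))) * (ennreal (erlang_density 0 r z) * h z)"
    proof (cases "z \<ge> 0")
      case True
      have "sexp \<mu> r (m + z) = exp (- (r * (m - \<mu>))) * erlang_density 0 r z"
        using True m by (simp add: sexp_def erlang_density_def exp_add[symmetric] algebra_simps)
      then show ?thesis using True r
        by (simp add: ennreal_mult' mult.assoc)
    next
      case False then show ?thesis by (simp add: erlang_density_def)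
    qed
  qed
  also have "\<dots> = ennreal (exp (- (r * (m - \<mu>)))) * (\<integral>\<^sup>+z. ennreal (erlang_density 0 r z) * h z \<partial>lborel)"
    by (rule nn_integral_cmult) measurable
  finally show ?thesis .
qed

lemma step_A2:
  assumes r: "r > 0" and k: "k \<ge> 1" and y: "\<mu> \<le> y" and [measurable]: "h \<in> borel_measurable borel"
  shows "(\<integral>\<^sup>+m. ennreal (sexp \<mu> (real k * r) m) * indicator {y<..} m * h (real k * (m - y)) \<partial>lborel) =
    ennreal (exp (- (real k * r * (y - \<mu>)))) * (\<integral>\<^sup>+z. ennreal (erlang_density 0 r z) * h z \<partial>lborel)"
proof -
  have kpos: "real k > 0" using k by simp
  have mf: "(\<lambda>m. ennreal (sexp \<mu> (real k * r) m) * indicator {y<..} m * h (real k * (m - y))) \<in> borel_measurable borel"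
    by measurable
  have "(\<integral>\<^sup>+m. ennreal (sexp \<mu> (real k * r) m) * indicator {y<..} m * h (real k * (m - y)) \<partial>lborel) =
     ennreal (1 / real k) * (\<integral>\<^sup>+z. ennreal (sexp \<mu> (real k * r) (y + 1 / real k * z)) * indicator {y<..} (y + 1 / real k * z) * h (real k * (y + 1 / real k * z - y)) \<partial>lborel)"
    using nn_integral_real_affine[OF mf, of "1 / real k" y] kpos by simp
  also have "\<dots> = ennreal (1 / real k) * (\<integral>\<^sup>+z. ennreal (real k * exp (- (real k * r * (y - \<mu>)))) * (ennreal (erlang_density 0 r z) * h z) \<partial>lborel)"
  proof (intro arg_cong2[where f="(*)"] refl nn_integral_cong_AE)
    show "AE z in lborel. ennreal (sexp \<mu> (real k * r) (y + 1 / real k * z)) * indicator {y<..} (y + 1 / real k * z) * h (real k * (y + 1 / real k * z - y)) =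
       ennreal (real k * exp (- (real k * r * (y - \<mu>)))) * (ennreal (erlang_density 0 r z) * h z)"
      using AE_lborel_singleton[of 0]
    proof eventually_elim
      case (elim z)
      show ?case
      proof (cases "z > 0")
        case True
        have zk: "0 < z / real k" using True kpos by simp
        have pos: "\<mu> \<le> y + z / real k" using zk y by linarith
        have e: "sexp \<mu> (real k * r) (y + 1 / real k * z) = real k * exp (- (real k * r * (y - \<mu>))) * erlang_density 0 r z"
          using True pos kpos r by (simp add: sexp_def erlang_density_def exp_add[symmetric] algebra_simps)
        have "real k * (y + 1 / real k * z - y) = z" using kpos by (simp add: field_simps)
        moreover have "ennreal (real k * exp (- (real k * r * (y - \<mu>))) * erlang_density 0 r z) =
          ennreal (real k * exp (- (real k * r * (y - \<mu>)))) * ennreal (erlang_density 0 r z)"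
          by (rule ennreal_mult') simp
        ultimately show ?thesis using True r kpos e
          by (simp add: mult.assoc del: ennreal_mult')
      next
        case False then have "z < 0" using elim by simp
        then show ?thesis using kpos by (simp add: erlang_density_def field_simps)
      qed
    qed
  qed
  also have "\<dots> = ennreal (1 / real k) * ennreal (real k * exp (- (real k * r * (y - \<mu>)))) * (\<integral>\<^sup>+z. ennreal (erlang_density 0 r z) * h z \<partial>lborel)"
    by (subst nn_integral_cmult) (measurable, simp add: mult.assoc)
  also have "ennreal (1 / real k) * ennreal (real k * exp (- (real k * r * (y - \<mu>)))) = ennreal (exp (- (real k * r * (y - \<mu>))))"
    using kpos by (simp add: ennreal_mult[symmetric])
  finally show ?thesis .
qed

lemma sexp_combine:
  "sexp \<mu> (real k * r) m * exp (- (r * (m - \<mu>))) + sexp \<mu> r m * exp (- (real k * r * (m - \<mu>))) =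
   sexp \<mu> (real (Suc k) * r) m"
  using exp_combine[of "real k" r m \<mu>] by (simp add: sexp_def algebra_simps)

lemma pred_atLeast_meas[measurable]:
  fixes f g :: "'a \<Rightarrow> real"
  assumes [measurable]: "f \<in> borel_measurable M" "g \<in> borel_measurable M"
  shows "Measurable.pred M (\<lambda>x. f x \<in> {g x..})" "Measurable.pred M (\<lambda>x. f x \<in> {..<g x})"
    "Measurable.pred M (\<lambda>x. f x \<in> {g x<..})"
  by simp_all measurable

lemma step:
  fixes g :: "real \<times> real \<Rightarrow> ennreal"
  assumes r: "r > 0" and k: "k \<ge> 1" and [measurable]: "g \<in> borel_measurable (borel \<Otimes>\<^sub>M borel)"
  shows "(\<integral>\<^sup>+m. ennreal (sexp \<mu> (real k * r) m) *
      Tint r k (\<lambda>t. \<integral>\<^sup>+y. ennreal (sexp \<mu> r y) *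
         g (min y m, if m \<le> y then t + (y - m) else t + real k * (m - y)) \<partial>lborel) \<partial>lborel) =
    (\<integral>\<^sup>+m. ennreal (sexp \<mu> (real (Suc k) * r) m) * Tint r (Suc k) (\<lambda>t. g (m, t)) \<partial>lborel)"
proof -
  define P1 where "P1 m t = (\<integral>\<^sup>+y. ennreal (sexp \<mu> r y) * indicator {m..} y * g (m, t + (y - m)) \<partial>lborel)" for m t
  define P2 where "P2 m t = (\<integral>\<^sup>+y. ennreal (sexp \<mu> r y) * indicator {..<m} y * g (y, t + real k * (m - y)) \<partial>lborel)" for m t
  have P1m[measurable]: "(\<lambda>(m, t). P1 m t) \<in> borel_measurable (borel \<Otimes>\<^sub>M borel)"
    unfolding P1_def by measurable
  have P2m[measurable]: "(\<lambda>(m, t). P2 m t) \<in> borel_measurable (borel \<Otimes>\<^sub>M borel)"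
    unfolding P2_def by measurable
  have conv: "Tint r k (\<lambda>t. \<integral>\<^sup>+z. ennreal (erlang_density 0 r z) * g (y, t + z) \<partial>lborel) = Tint r (Suc k) (\<lambda>t. g (y, t))" for y
    by (rule Tint_conv[OF r k]) measurable
  have split: "(\<integral>\<^sup>+y. ennreal (sexp \<mu> r y) *
         g (min y m, if m \<le> y then t + (y - m) else t + real k * (m - y)) \<partial>lborel) = P1 m t + P2 m t" for m t
    unfolding P1_def P2_def
    by (subst nn_integral_add[symmetric]) (measurable, auto intro!: nn_integral_cong split: split_indicator simp: min_def)
  have "(\<integral>\<^sup>+m. ennreal (sexp \<mu> (real k * r) m) *
      Tint r k (\<lambda>t. \<integral>\<^sup>+y. ennreal (sexp \<mu> r y) *
         g (min y m, if m \<le> y then t + (y - m) else t + real k * (m - y)) \<partial>lborel) \<partial>lborel) =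
    (\<integral>\<^sup>+m. ennreal (sexp \<mu> (real k * r) m) * Tint r k (P1 m) + ennreal (sexp \<mu> (real k * r) m) * Tint r k (P2 m) \<partial>lborel)"
    by (simp add: split Tint_add distrib_left)
  also have "\<dots> = (\<integral>\<^sup>+m. ennreal (sexp \<mu> (real k * r) m) * Tint r k (P1 m) \<partial>lborel) +
      (\<integral>\<^sup>+m. ennreal (sexp \<mu> (real k * r) m) * Tint r k (P2 m) \<partial>lborel)"
    by (rule nn_integral_add) measurable
  also have "(\<integral>\<^sup>+m. ennreal (sexp \<mu> (real k * r) m) * Tint r k (P1 m) \<partial>lborel) =
     (\<integral>\<^sup>+m. ennreal (sexp \<mu> (real k * r) m * exp (- (r * (m - \<mu>)))) * Tint r (Suc k) (\<lambda>t. g (m, t)) \<partial>lborel)"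
  proof (intro nn_integral_cong)
    fix m :: real
    show "ennreal (sexp \<mu> (real k * r) m) * Tint r k (P1 m) =
      ennreal (sexp \<mu> (real k * r) m * exp (- (r * (m - \<mu>)))) * Tint r (Suc k) (\<lambda>t. g (m, t))"
    proof (cases "\<mu> \<le> m")
      case True
      have e: "P1 m = (\<lambda>t. ennreal (exp (- (r * (m - \<mu>)))) * (\<integral>\<^sup>+z. ennreal (erlang_density 0 r z) * g (m, t + z) \<partial>lborel))"
        unfolding P1_def using step_A1[OF r True, of "\<lambda>z. g (m, _ + z)"] by (intro ext) simp
      have "Tint r k (\<lambda>t. ennreal (exp (- (r * (m - \<mu>)))) * (\<integral>\<^sup>+z. ennreal (erlang_density 0 r z) * g (m, t + z) \<partial>lborel)) =
         ennreal (exp (- (r * (m - \<mu>)))) * Tint r k (\<lambda>t. \<integral>\<^sup>+z. ennreal (erlang_density 0 r z) * g (m, t + z) \<partial>lborel)"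
        by (rule Tint_cmult) measurable
      also have "Tint r k (\<lambda>t. \<integral>\<^sup>+z. ennreal (erlang_density 0 r z) * g (m, t + z) \<partial>lborel) = Tint r (Suc k) (\<lambda>t. g (m, t))"
        by (rule Tint_conv[OF r k]) measurable
      finally have "Tint r k (P1 m) = ennreal (exp (- (r * (m - \<mu>)))) * Tint r (Suc k) (\<lambda>t. g (m, t))"
        by (simp add: e)
      then show ?thesis using r by (simp add: ennreal_mult sexp_nonneg mult.assoc)
    next
      case False then show ?thesis by (simp add: sexp_def)
    qed
  qed
  also have "(\<integral>\<^sup>+m. ennreal (sexp \<mu> (real k * r) m) * Tint r k (P2 m) \<partial>lborel) =
     (\<integral>\<^sup>+m. Tint r k (\<lambda>t. \<integral>\<^sup>+y. ennreal (sexp \<mu> (real k * r) m) * (ennreal (sexp \<mu> r y) * indicator {..<m} y * g (y, t + real k * (m - y))) \<partial>lborel) \<partial>lborel)"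
    unfolding P2_def
    by (intro nn_integral_cong) (simp add: Tint_cmult nn_integral_cmult)
  also have "\<dots> = Tint r k (\<lambda>t. \<integral>\<^sup>+m. \<integral>\<^sup>+y. ennreal (sexp \<mu> (real k * r) m) * (ennreal (sexp \<mu> r y) * indicator {..<m} y * g (y, t + real k * (m - y))) \<partial>lborel \<partial>lborel)"
    by (rule Tint_swap[symmetric]) measurable
  also have "\<dots> = Tint r k (\<lambda>t. \<integral>\<^sup>+y. \<integral>\<^sup>+m. ennreal (sexp \<mu> (real k * r) m) * (ennreal (sexp \<mu> r y) * indicator {..<m} y * g (y, t + real k * (m - y))) \<partial>lborel \<partial>lborel)"
    by (intro arg_cong[where f="Tint r k"] ext lborel_pair.Fubini') measurable
  also have "\<dots> = Tint r k (\<lambda>t. \<integral>\<^sup>+y. ennreal (sexp \<mu> r y * exp (- (real k * r * (y - \<mu>)))) *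
       (\<integral>\<^sup>+z. ennreal (erlang_density 0 r z) * g (y, t + z) \<partial>lborel) \<partial>lborel)"
  proof (intro arg_cong[where f="Tint r k"] ext nn_integral_cong)
    fix t y :: real
    show "(\<integral>\<^sup>+m. ennreal (sexp \<mu> (real k * r) m) * (ennreal (sexp \<mu> r y) * indicator {..<m} y * g (y, t + real k * (m - y))) \<partial>lborel) =
      ennreal (sexp \<mu> r y * exp (- (real k * r * (y - \<mu>)))) * (\<integral>\<^sup>+z. ennreal (erlang_density 0 r z) * g (y, t + z) \<partial>lborel)"
    proof (cases "\<mu> \<le> y")
      case True
      have "(\<integral>\<^sup>+m. ennreal (sexp \<mu> (real k * r) m) * (ennreal (sexp \<mu> r y) * indicator {..<m} y * g (y, t + real k * (m - y))) \<partial>lborel) =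
        (\<integral>\<^sup>+m. ennreal (sexp \<mu> r y) * (ennreal (sexp \<mu> (real k * r) m) * indicator {y<..} m * g (y, t + real k * (m - y))) \<partial>lborel)"
        by (intro nn_integral_cong) (simp add: mult_ac split: split_indicator)
      also have "\<dots> = ennreal (sexp \<mu> r y) * (\<integral>\<^sup>+m. ennreal (sexp \<mu> (real k * r) m) * indicator {y<..} m * g (y, t + real k * (m - y)) \<partial>lborel)"
        by (rule nn_integral_cmult) measurable
      also have "\<dots> = ennreal (sexp \<mu> r y) * (ennreal (exp (- (real k * r * (y - \<mu>)))) * (\<integral>\<^sup>+z. ennreal (erlang_density 0 r z) * g (y, t + z) \<partial>lborel))"
        using step_A2[OF r k True, of "\<lambda>w. g (y, t + w)"] by simp
      finally show ?thesis using r by (simp add: ennreal_mult sexp_nonneg mult.assoc)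
    next
      case False then show ?thesis by (simp add: sexp_def)
    qed
  qed
  also have "\<dots> = (\<integral>\<^sup>+y. Tint r k (\<lambda>t. ennreal (sexp \<mu> r y * exp (- (real k * r * (y - \<mu>)))) *
       (\<integral>\<^sup>+z. ennreal (erlang_density 0 r z) * g (y, t + z) \<partial>lborel)) \<partial>lborel)"
    by (rule Tint_swap) measurable
  also have "\<dots> = (\<integral>\<^sup>+y. ennreal (sexp \<mu> r y * exp (- (real k * r * (y - \<mu>)))) * Tint r (Suc k) (\<lambda>t. g (y, t)) \<partial>lborel)"
    by (intro nn_integral_cong) (simp add: Tint_cmult conv)
  also have "(\<integral>\<^sup>+m. ennreal (sexp \<mu> (real k * r) m * exp (- (r * (m - \<mu>)))) * Tint r (Suc k) (\<lambda>t. g (m, t)) \<partial>lborel) +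
      (\<integral>\<^sup>+y. ennreal (sexp \<mu> r y * exp (- (real k * r * (y - \<mu>)))) * Tint r (Suc k) (\<lambda>t. g (y, t)) \<partial>lborel) =
    (\<integral>\<^sup>+m. ennreal (sexp \<mu> (real k * r) m * exp (- (r * (m - \<mu>)))) * Tint r (Suc k) (\<lambda>t. g (m, t)) +
       ennreal (sexp \<mu> r m * exp (- (real k * r * (m - \<mu>)))) * Tint r (Suc k) (\<lambda>t. g (m, t)) \<partial>lborel)"
    by (rule nn_integral_add[symmetric]) measurable
  also have "\<dots> = (\<integral>\<^sup>+m. ennreal (sexp \<mu> (real (Suc k) * r) m) * Tint r (Suc k) (\<lambda>t. g (m, t)) \<partial>lborel)"
  proof (intro nn_integral_cong)
    fix m :: real
    have "ennreal (sexp \<mu> (real k * r) m * exp (- (r * (m - \<mu>)))) + ennreal (sexp \<mu> r m * exp (- (real k * r * (m - \<mu>)))) =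
       ennreal (sexp \<mu> (real (Suc k) * r) m)"
      using r by (subst ennreal_plus[symmetric]) (auto simp: sexp_nonneg sexp_combine)
    then show "ennreal (sexp \<mu> (real k * r) m * exp (- (r * (m - \<mu>)))) * Tint r (Suc k) (\<lambda>t. g (m, t)) +
       ennreal (sexp \<mu> r m * exp (- (real k * r * (m - \<mu>)))) * Tint r (Suc k) (\<lambda>t. g (m, t)) =
       ennreal (sexp \<mu> (real (Suc k) * r) m) * Tint r (Suc k) (\<lambda>t. g (m, t))"
      by (metis distrib_right)
  qed
  finally show ?thesis .
qed

lemma sigma_finite_sexp: "sigma_finite_measure (density lborel (\<lambda>x. ennreal (sexp \<mu> r x)))"
  by (subst sigma_finite_measure.sigma_finite_iff_density_finite'[OF sigma_finite_lborel]) auto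

lemma product_sigma_finite_sexp: "product_sigma_finite (\<lambda>_. density lborel (\<lambda>x. ennreal (sexp \<mu> r x)))"
  unfolding product_sigma_finite_def using sigma_finite_sexp by blast

lemma min_sum_insert:
  fixes x :: "'i \<Rightarrow> real"
  assumes K: "finite K" "K \<noteq> {}" "a \<notin> K"
  shows "Min ((x(a := y)) ` insert a K) = min y (Min (x ` K))"
    and "(\<Sum>j\<in>insert a K. (x(a := y)) j - Min ((x(a := y)) ` insert a K)) =
      (if Min (x ` K) \<le> y then (\<Sum>j\<in>K. x j - Min (x ` K)) + (y - Min (x ` K))
       else (\<Sum>j\<in>K. x j - Min (x ` K)) + real (card K) * (Min (x ` K) - y))"
proof -
  have img: "(x(a := y)) ` K = x ` K" using K(3) by (auto simp: image_def)
  show 1: "Min ((x(a := y)) ` insert a K) = min y (Min (x ` K))"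
  proof -
    have e: "(x(a := y)) ` insert a K = insert y (x ` K)" using img by auto
    show ?thesis using K by (subst e) (simp add: Min_insert)
  qed
  have s: "(\<Sum>j\<in>K. (x(a := y)) j - c) = (\<Sum>j\<in>K. x j - Min (x ` K)) + real (card K) * (Min (x ` K) - c)" for c
  proof -
    have "(\<Sum>j\<in>K. (x(a := y)) j - c) = (\<Sum>j\<in>K. x j - c)"
      using K(3) by (intro sum.cong) auto
    then show ?thesis by (simp add: sum_subtractf algebra_simps)

  qed
  show "(\<Sum>j\<in>insert a K. (x(a := y)) j - Min ((x(a := y)) ` insert a K)) =
      (if Min (x ` K) \<le> y then (\<Sum>j\<in>K. x j - Min (x ` K)) + (y - Min (x ` K))
       else (\<Sum>j\<in>K. x j - Min (x ` K)) + real (card K) * (Min (x ` K) - y))"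
    apply (subst 1, subst sum.insert[OF K(1) K(3)], subst s)
    apply (simp only: fun_upd_same)
    using antisym[of "Min (x ` K)" y] by (auto simp: min_def algebra_simps)
qed

lemma sample_law:
  fixes K :: "'i set" and g :: "real \<times> real \<Rightarrow> ennreal"
  assumes "finite K" "K \<noteq> {}" and r: "r > 0" and "g \<in> borel_measurable (borel \<Otimes>\<^sub>M borel)"
  shows "(\<integral>\<^sup>+x. g (Min (x ` K), \<Sum>j\<in>K. x j - Min (x ` K)) \<partial>PiM K (\<lambda>_. density lborel (\<lambda>x. ennreal (sexp \<mu> r x)))) =
    (\<integral>\<^sup>+m. ennreal (sexp \<mu> (real (card K) * r) m) * Tint r (card K) (\<lambda>t. g (m, t)) \<partial>lborel)"
  using assms(1,2,4)
proof (induction K arbitrary: g rule: finite_ne_induct)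
  case (singleton a)
  interpret product_sigma_finite "\<lambda>_. density lborel (\<lambda>x. ennreal (sexp \<mu> r x))"
    by (rule product_sigma_finite_sexp)
  note [measurable] = singleton
  have "(\<integral>\<^sup>+x. g (Min (x ` {a}), \<Sum>j\<in>{a}. x j - Min (x ` {a})) \<partial>PiM {a} (\<lambda>_. density lborel (\<lambda>x. ennreal (sexp \<mu> r x)))) =
     (\<integral>\<^sup>+x. g (x a, 0) \<partial>PiM {a} (\<lambda>_. density lborel (\<lambda>x. ennreal (sexp \<mu> r x))))"
    by simp
  also have "\<dots> = (\<integral>\<^sup>+y. g (y, 0) \<partial>density lborel (\<lambda>x. ennreal (sexp \<mu> r x)))"
    by (rule product_nn_integral_singleton[of "\<lambda>y. g (y, 0)"]) measurable
  also have "\<dots> = (\<integral>\<^sup>+y. ennreal (sexp \<mu> r y) * g (y, 0) \<partial>lborel)"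
    by (rule nn_integral_density) measurable
  finally show ?case by (simp add: Tint_def)
next
  case (insert a K)
  interpret product_sigma_finite "\<lambda>_. density lborel (\<lambda>x. ennreal (sexp \<mu> r x))"
    by (rule product_sigma_finite_sexp)
  note [measurable] = insert.prems
  define k where "k = card K"
  have k: "k \<ge> 1" using insert.hyps unfolding k_def by (simp add: Suc_le_eq card_gt_0_iff)
  define G where "G = (\<lambda>(m, t). \<integral>\<^sup>+y. ennreal (sexp \<mu> r y) *
         g (min y m, if m \<le> y then t + (y - m) else t + real k * (m - y)) \<partial>lborel)"
  have Gm[measurable]: "G \<in> borel_measurable (borel \<Otimes>\<^sub>M borel)"
    unfolding G_def by measurable
  have "(\<integral>\<^sup>+x. g (Min (x ` insert a K), \<Sum>j\<in>insert a K. x j - Min (x ` insert a K)) \<partial>PiM (insert a K) (\<lambda>_. density lborel (\<lambda>x. ennreal (sexp \<mu> r x)))) =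
    (\<integral>\<^sup>+x. \<integral>\<^sup>+y. g (Min ((x(a:=y)) ` insert a K), \<Sum>j\<in>insert a K. (x(a:=y)) j - Min ((x(a:=y)) ` insert a K)) \<partial>density lborel (\<lambda>x. ennreal (sexp \<mu> r x)) \<partial>PiM K (\<lambda>_. density lborel (\<lambda>x. ennreal (sexp \<mu> r x))))"
  proof (rule product_nn_integral_insert)
    have fin[simp]: "finite (insert a K)" using insert.hyps by simp
    have c[measurable]: "(\<lambda>x. x i) \<in> borel_measurable (PiM (insert a K) (\<lambda>_. density lborel (\<lambda>x. ennreal (sexp \<mu> r x))))"
      if "i \<in> insert a K" for i
      using measurable_component_singleton[OF that, of "\<lambda>_. density lborel (\<lambda>x. ennreal (sexp \<mu> r x))"] by simp
    have mn: "(\<lambda>x. Min (x ` insert a K)) \<in> borel_measurable (PiM (insert a K) (\<lambda>_. density lborel (\<lambda>x. ennreal (sexp \<mu> r x))))"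
      by (rule borel_measurable_Min[OF fin c])
    have sm: "(\<lambda>x. \<Sum>j\<in>insert a K. x j - Min (x ` insert a K)) \<in> borel_measurable (PiM (insert a K) (\<lambda>_. density lborel (\<lambda>x. ennreal (sexp \<mu> r x))))"
      by (rule borel_measurable_sum, rule borel_measurable_diff[OF c mn])
    show "(\<lambda>x. g (Min (x ` insert a K), \<Sum>j\<in>insert a K. x j - Min (x ` insert a K))) \<in> borel_measurable (PiM (insert a K) (\<lambda>_. density lborel (\<lambda>x. ennreal (sexp \<mu> r x))))"
      by (rule measurable_compose[OF measurable_Pair[OF mn sm] insert.prems])
  qed (use insert.hyps in auto)
  also have "\<dots> = (\<integral>\<^sup>+x. G (Min (x ` K), \<Sum>j\<in>K. x j - Min (x ` K)) \<partial>PiM K (\<lambda>_. density lborel (\<lambda>x. ennreal (sexp \<mu> r x))))"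
  proof (intro nn_integral_cong)
    fix x :: "'i \<Rightarrow> real"
    have "(\<integral>\<^sup>+y. g (Min ((x(a:=y)) ` insert a K), \<Sum>j\<in>insert a K. (x(a:=y)) j - Min ((x(a:=y)) ` insert a K)) \<partial>density lborel (\<lambda>x. ennreal (sexp \<mu> r x))) =
      (\<integral>\<^sup>+y. g (min y (Min (x ` K)), if Min (x ` K) \<le> y then (\<Sum>j\<in>K. x j - Min (x ` K)) + (y - Min (x ` K))
       else (\<Sum>j\<in>K. x j - Min (x ` K)) + real k * (Min (x ` K) - y)) \<partial>density lborel (\<lambda>x. ennreal (sexp \<mu> r x)))"
      using min_sum_insert[OF insert.hyps(1,2,3), of x] by (simp only: k_def)
    also have "\<dots> = G (Min (x ` K), \<Sum>j\<in>K. x j - Min (x ` K))"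
      unfolding G_def by (simp, rule nn_integral_density) measurable
    finally show "(\<integral>\<^sup>+y. g (Min ((x(a:=y)) ` insert a K), \<Sum>j\<in>insert a K. (x(a:=y)) j - Min ((x(a:=y)) ` insert a K)) \<partial>density lborel (\<lambda>x. ennreal (sexp \<mu> r x))) =
       G (Min (x ` K), \<Sum>j\<in>K. x j - Min (x ` K))" .
  qed
  also have "\<dots> = (\<integral>\<^sup>+m. ennreal (sexp \<mu> (real k * r) m) * Tint r k (\<lambda>t. G (m, t)) \<partial>lborel)"
    using insert.IH[OF Gm] by (simp add: k_def)
  also have "\<dots> = (\<integral>\<^sup>+m. ennreal (sexp \<mu> (real (Suc k) * r) m) * Tint r (Suc k) (\<lambda>t. g (m, t)) \<partial>lborel)"
    unfolding G_def using step[OF r k insert.prems] by simp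
  finally show ?case using insert.hyps by (simp add: k_def)
qed

lemma conv2:
  assumes r: "r > 0" and [measurable]: "h \<in> borel_measurable borel"
  shows "(\<integral>\<^sup>+t1. ennreal (erlang_density a r t1) * (\<integral>\<^sup>+t2. ennreal (erlang_density b r t2) * h (t1 + t2) \<partial>lborel) \<partial>lborel) =
    (\<integral>\<^sup>+s. ennreal (erlang_density (Suc (a + b)) r s) * h s \<partial>lborel)"
proof -
  have aff: "(\<integral>\<^sup>+z. ennreal (erlang_density b r z) * h (t + z) \<partial>lborel) = (\<integral>\<^sup>+s. ennreal (erlang_density b r (s - t)) * h s \<partial>lborel)" for t
  proof -
    have m: "(\<lambda>s. ennreal (erlang_density b r (s - t)) * h s) \<in> borel_measurable borel" by measurable
    show ?thesis using nn_integral_real_affine[OF m, of 1 t] by simp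
  qed
  have "(\<integral>\<^sup>+t1. ennreal (erlang_density a r t1) * (\<integral>\<^sup>+t2. ennreal (erlang_density b r t2) * h (t1 + t2) \<partial>lborel) \<partial>lborel) =
     (\<integral>\<^sup>+t. ennreal (erlang_density a r t) * (\<integral>\<^sup>+s. ennreal (erlang_density b r (s - t)) * h s \<partial>lborel) \<partial>lborel)"
    by (simp add: aff)
  also have "\<dots> = (\<integral>\<^sup>+t. \<integral>\<^sup>+s. ennreal (erlang_density a r t) * ennreal (erlang_density b r (s - t)) * h s \<partial>lborel \<partial>lborel)"
    by (simp add: nn_integral_cmult mult.assoc)
  also have "\<dots> = (\<integral>\<^sup>+s. \<integral>\<^sup>+t. ennreal (erlang_density a r t) * ennreal (erlang_density b r (s - t)) * h s \<partial>lborel \<partial>lborel)"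
    by (rule lborel_pair.Fubini') measurable
  also have "\<dots> = (\<integral>\<^sup>+s. (\<integral>\<^sup>+t. ennreal (erlang_density b r (s - t)) * ennreal (erlang_density a r t) \<partial>lborel) * h s \<partial>lborel)"
  proof -
    have "(\<integral>\<^sup>+t. ennreal (erlang_density b r (s - t)) * ennreal (erlang_density a r t) * h s \<partial>lborel) =
      (\<integral>\<^sup>+t. ennreal (erlang_density b r (s - t)) * ennreal (erlang_density a r t) \<partial>lborel) * h s" for s
      by (rule nn_integral_multc) measurable
    then show ?thesis by (simp add: mult_ac)
  qed
  also have "\<dots> = (\<integral>\<^sup>+s. ennreal (erlang_density (Suc (a + b)) r s) * h s \<partial>lborel)"
  proof -
    have "(\<lambda>x. \<integral>\<^sup>+y. ennreal (erlang_density b r (x - y)) * ennreal (erlang_density a r y) \<partial>lborel) =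
      erlang_density (Suc b + Suc a - 1) r"
      by (rule convolution_erlang_density[OF r])
    moreover have "Suc b + Suc a - 1 = Suc (a + b)" by simp
    ultimately show ?thesis by (simp add: fun_eq_iff add.commute)
  qed
  finally show ?thesis .
qed

lemma subst3:
  fixes F :: "real \<times> real \<times> real \<Rightarrow> ennreal"
  assumes s: "\<sigma> > 0" and [measurable]: "F \<in> borel_measurable (borel \<Otimes>\<^sub>M (borel \<Otimes>\<^sub>M borel))"
  shows "(\<integral>\<^sup>+s. indicator {0<..} s * (\<integral>\<^sup>+ma. \<integral>\<^sup>+mb. F (s, ma, mb) \<partial>lborel \<partial>lborel) \<partial>lborel) =
    (\<integral>\<^sup>+v. \<integral>\<^sup>+u. \<integral>\<^sup>+w. ennreal (\<sigma> ^ 3 * v) * indicator {0<..} v * F (\<sigma> * v, ma0 + \<sigma> * u, ma0 + \<sigma> * u + \<sigma> * v * w) \<partial>lborel \<partial>lborel \<partial>lborel)"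
proof -
  have inner: "(\<integral>\<^sup>+mb. F (s, ma, mb) \<partial>lborel) = ennreal s * (\<integral>\<^sup>+w. F (s, ma, ma + s * w) \<partial>lborel)" if "s > 0" for s ma
  proof -
    have m: "(\<lambda>mb. F (s, ma, mb)) \<in> borel_measurable borel" by measurable
    show ?thesis using nn_integral_real_affine[OF m, of s ma] that by simp
  qed
  have "(\<integral>\<^sup>+s. indicator {0<..} s * (\<integral>\<^sup>+ma. \<integral>\<^sup>+mb. F (s, ma, mb) \<partial>lborel \<partial>lborel) \<partial>lborel) =
     (\<integral>\<^sup>+s. indicator {0<..} s * (\<integral>\<^sup>+ma. ennreal s * (\<integral>\<^sup>+w. F (s, ma, ma + s * w) \<partial>lborel) \<partial>lborel) \<partial>lborel)"
    by (intro nn_integral_cong) (auto simp: inner split: split_indicator)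
  also have "\<dots> = (\<integral>\<^sup>+s. indicator {0<..} s * (ennreal s * (\<integral>\<^sup>+ma. \<integral>\<^sup>+w. F (s, ma, ma + s * w) \<partial>lborel \<partial>lborel)) \<partial>lborel)"
    by (intro nn_integral_cong arg_cong2[where f="(*)"] refl nn_integral_cmult) measurable
  also have "\<dots> = (\<integral>\<^sup>+s. indicator {0<..} s * (ennreal s * (ennreal \<sigma> * (\<integral>\<^sup>+u. \<integral>\<^sup>+w. F (s, ma0 + \<sigma> * u, ma0 + \<sigma> * u + s * w) \<partial>lborel \<partial>lborel))) \<partial>lborel)"
  proof -
    have "(\<integral>\<^sup>+ma. \<integral>\<^sup>+w. F (s, ma, ma + s * w) \<partial>lborel \<partial>lborel) =
       ennreal \<sigma> * (\<integral>\<^sup>+u. \<integral>\<^sup>+w. F (s, ma0 + \<sigma> * u, ma0 + \<sigma> * u + s * w) \<partial>lborel \<partial>lborel)" for s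
    proof -
      have m: "(\<lambda>ma. \<integral>\<^sup>+w. F (s, ma, ma + s * w) \<partial>lborel) \<in> borel_measurable borel" by measurable
      show ?thesis using nn_integral_real_affine[OF m, of \<sigma> ma0] s by simp
    qed
    then show ?thesis by simp
  qed
  also have "\<dots> = ennreal \<sigma> * (\<integral>\<^sup>+v. indicator {0<..} (\<sigma> * v) * (ennreal (\<sigma> * v) * (ennreal \<sigma> * (\<integral>\<^sup>+u. \<integral>\<^sup>+w. F (\<sigma> * v, ma0 + \<sigma> * u, ma0 + \<sigma> * u + \<sigma> * v * w) \<partial>lborel \<partial>lborel))) \<partial>lborel)"
  proof -
    have m: "(\<lambda>s. indicator {0<..} s * (ennreal s * (ennreal \<sigma> * (\<integral>\<^sup>+u. \<integral>\<^sup>+w. F (s, ma0 + \<sigma> * u, ma0 + \<sigma> * u + s * w) \<partial>lborel \<partial>lborel)))) \<in> borel_measurable borel"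
      by measurable
    show ?thesis using nn_integral_real_affine[OF m, of \<sigma> 0] s by simp
  qed
  also have "\<dots> = (\<integral>\<^sup>+v. ennreal \<sigma> * (indicator {0<..} (\<sigma> * v) * (ennreal (\<sigma> * v) * (ennreal \<sigma> * (\<integral>\<^sup>+u. \<integral>\<^sup>+w. F (\<sigma> * v, ma0 + \<sigma> * u, ma0 + \<sigma> * u + \<sigma> * v * w) \<partial>lborel \<partial>lborel)))) \<partial>lborel)"
    by (rule nn_integral_cmult[symmetric]) measurable
  also have "\<dots> = (\<integral>\<^sup>+v. \<integral>\<^sup>+u. \<integral>\<^sup>+w. ennreal (\<sigma> ^ 3 * v) * indicator {0<..} v * F (\<sigma> * v, ma0 + \<sigma> * u, ma0 + \<sigma> * u + \<sigma> * v * w) \<partial>lborel \<partial>lborel \<partial>lborel)"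
  proof (intro nn_integral_cong)
    fix v :: real
    show "ennreal \<sigma> * (indicator {0<..} (\<sigma> * v) * (ennreal (\<sigma> * v) * (ennreal \<sigma> * (\<integral>\<^sup>+u. \<integral>\<^sup>+w. F (\<sigma> * v, ma0 + \<sigma> * u, ma0 + \<sigma> * u + \<sigma> * v * w) \<partial>lborel \<partial>lborel)))) =
      (\<integral>\<^sup>+u. \<integral>\<^sup>+w. ennreal (\<sigma> ^ 3 * v) * indicator {0<..} v * F (\<sigma> * v, ma0 + \<sigma> * u, ma0 + \<sigma> * u + \<sigma> * v * w) \<partial>lborel \<partial>lborel)"
    proof (cases "v > 0")
      case True
      have c: "ennreal \<sigma> * (ennreal (\<sigma> * v) * ennreal \<sigma>) = ennreal (\<sigma> ^ 3 * v)"
        using s True by (simp add: ennreal_mult[symmetric] power3_eq_cube mult_ac)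
      have "(\<integral>\<^sup>+u. \<integral>\<^sup>+w. ennreal (\<sigma> ^ 3 * v) * indicator {0<..} v * F (\<sigma> * v, ma0 + \<sigma> * u, ma0 + \<sigma> * u + \<sigma> * v * w) \<partial>lborel \<partial>lborel) =
        (\<integral>\<^sup>+u. ennreal (\<sigma> ^ 3 * v) * \<integral>\<^sup>+w. F (\<sigma> * v, ma0 + \<sigma> * u, ma0 + \<sigma> * u + \<sigma> * v * w) \<partial>lborel \<partial>lborel)"
        using True by (intro nn_integral_cong) (simp, rule nn_integral_cmult, measurable)
      also have "\<dots> = ennreal (\<sigma> ^ 3 * v) * (\<integral>\<^sup>+u. \<integral>\<^sup>+w. F (\<sigma> * v, ma0 + \<sigma> * u, ma0 + \<sigma> * u + \<sigma> * v * w) \<partial>lborel \<partial>lborel)"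
        by (rule nn_integral_cmult) measurable
      finally show ?thesis using True s c[symmetric]
        by (simp add: mult.assoc[symmetric] mult_pos_pos)
    next
      case False
      then have "\<not> \<sigma> * v > 0" using s by (simp add: zero_less_mult_iff)
      then show ?thesis using False by simp
    qed
  qed
  finally show ?thesis .
qed

lemma Gamma_2n: "n \<ge> 2 \<Longrightarrow> Gamma (2 * (real n - 1)) = fact (2 * n - 3)"
proof -
  assume n: "n \<ge> 2"
  have h: "2 * (real n - 1) = 1 + of_nat (2 * n - 3)" using n by (simp add: of_nat_diff)
  show ?thesis by (subst h) (rule Gamma_fact)
qed

lemma erl_scaled: "\<sigma> > 0 \<Longrightarrow> v > 0 \<Longrightarrow> erlang_density N (1 / \<sigma>) (\<sigma> * v) = (1 / \<sigma>) * v ^ N * exp (- v) / fact N"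
  by (simp add: erlang_density_def power_mult_distrib power_divide not_less)

definition Kf :: "nat \<Rightarrow> real \<Rightarrow> real \<Rightarrow> real \<Rightarrow> real" where
  "Kf n u v w = real n ^ 2 / fact (2 * n - 3) * v ^ (2 * n - 2) * exp (- v * (1 + real n * w)) * exp (- 2 * real n * u)"

lemma region_val:
  assumes s: "\<sigma> > 0" and n: "n \<ge> 2" and u: "u \<ge> 0" and v: "v > 0"
  shows "\<sigma> ^ 3 * v * (erlang_density (2 * n - 3) (1 / \<sigma>) (\<sigma> * v) * sexp ma (real n * (1 / \<sigma>)) (ma + \<sigma> * u) *
     sexp mb (real n * (1 / \<sigma>)) (ma + \<sigma> * u + \<sigma> * v * w)) =
    (if mb \<le> ma + \<sigma> * u + \<sigma> * v * w then Kf n u v w * exp (real n * (mb - ma) / \<sigma>) else 0)"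
proof -
  define N where "N = 2 * n - 3"
  have N2: "2 * n - 2 = Suc N" using n unfolding N_def by simp
  show ?thesis
  proof (cases "mb \<le> ma + \<sigma> * u + \<sigma> * v * w")
    case False then show ?thesis by (simp add: sexp_def)
  next
    case True
    define X where "X = exp (- v)"
    define Y where "Y = exp (- (real n * u))"
    define Z where "Z = exp (- (real n * (ma + \<sigma> * u + \<sigma> * v * w - mb)))"
    have e: "erlang_density N (1 / \<sigma>) (\<sigma> * v) = (1 / \<sigma>) * v ^ N * X / fact N"
      unfolding X_def by (rule erl_scaled[OF s v])
    have s1: "sexp ma (real n * (1 / \<sigma>)) (ma + \<sigma> * u) = real n / \<sigma> * Y"
      using s u unfolding Y_def by (simp add: sexp_def)
    have s2: "sexp mb (real n * (1 / \<sigma>)) (ma + \<sigma> * u + \<sigma> * v * w) = real n / \<sigma> * exp (- (real n * (1 / \<sigma>) * (ma + \<sigma> * u + \<sigma> * v * w - mb)))"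
      using True by (simp add: sexp_def)
    have ex: "X * Y * exp (- (real n * (1 / \<sigma>) * (ma + \<sigma> * u + \<sigma> * v * w - mb))) =
       exp (- v * (1 + real n * w)) * exp (- 2 * real n * u) * exp (real n * (mb - ma) / \<sigma>)"
    proof -
      have "- v + - (real n * u) + - (real n * (1 / \<sigma>) * (ma + \<sigma> * u + \<sigma> * v * w - mb)) =
         - v * (1 + real n * w) + - 2 * real n * u + real n * (mb - ma) / \<sigma>"
        using s by (simp add: field_simps)
      then show ?thesis unfolding X_def Y_def by (simp add: exp_add[symmetric])
    qed
    have alg: "\<sigma> ^ 3 * v * ((1 / \<sigma>) * v ^ N * X / fact N * (real n / \<sigma> * Y) * (real n / \<sigma> * W)) =
      real n ^ 2 / fact N * v ^ Suc N * (X * Y * W)" for W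
    proof -
      have "\<sigma> ^ 3 * (1 / \<sigma>) * (1 / \<sigma>) * (1 / \<sigma>) = 1" using s by (simp add: power3_eq_cube)
      then show ?thesis using s by (simp add: power2_eq_square divide_simps mult_ac)
    qed
    have "\<sigma> ^ 3 * v * (erlang_density (2 * n - 3) (1 / \<sigma>) (\<sigma> * v) * sexp ma (real n * (1 / \<sigma>)) (ma + \<sigma> * u) *
       sexp mb (real n * (1 / \<sigma>)) (ma + \<sigma> * u + \<sigma> * v * w)) =
       real n ^ 2 / fact N * v ^ Suc N * (exp (- v * (1 + real n * w)) * exp (- 2 * real n * u) * exp (real n * (mb - ma) / \<sigma>))"
      unfolding N_def[symmetric] e s1 s2 alg ex ..
    also have "\<dots> = Kf n u v w * exp (real n * (mb - ma) / \<sigma>)"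
      unfolding Kf_def N2 N_def[symmetric] by (simp only: mult_ac)
    finally show ?thesis using True by simp
  qed
qed

lemma f4_one_Kf:
  assumes n: "n \<ge> 2"
  shows "real n ^ 2 / (Gamma (2 * (real n - 1)) * ((\<lambda>_. 1::real) w)) * v ^ (2 * n - 2) * exp (- v * (1 + real n * w)) * exp (- 2 * real n * u)
    = Kf n u v w"
  unfolding Kf_def Gamma_2n[OF n] by simp

lemma f4_val:
  fixes \<mu>1 \<mu>2 \<sigma> u v w :: real
  assumes s: "\<sigma> > 0" and n: "n \<ge> 2" and u: "u > 0" and v: "v > 0" and w: "w > 0"
    and ud: "u \<noteq> (max \<mu>1 \<mu>2 - min \<mu>1 \<mu>2) / \<sigma>" and uvd: "u + v * w \<noteq> (max \<mu>1 \<mu>2 - min \<mu>1 \<mu>2) / \<sigma>"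
  shows "f4 n (real n * (max \<mu>1 \<mu>2 - min \<mu>1 \<mu>2) / \<sigma>) (\<lambda>_. 1) u v w =
    Kf n u v w * ((if \<mu>2 \<le> \<mu>1 + \<sigma> * u + \<sigma> * v * w then exp (real n * (\<mu>2 - \<mu>1) / \<sigma>) else 0) +
                  (if \<mu>1 \<le> \<mu>2 + \<sigma> * u + \<sigma> * v * w then exp (real n * (\<mu>1 - \<mu>2) / \<sigma>) else 0))"
proof -
  define d where "d = (max \<mu>1 \<mu>2 - min \<mu>1 \<mu>2) / \<sigma>"
  define mu where "mu = real n * (max \<mu>1 \<mu>2 - min \<mu>1 \<mu>2) / \<sigma>"
  have npos: "real n > 0" using n by simp
  have d0: "d \<ge> 0" unfolding d_def using s by simp
  have mu_n: "mu / real n = d" unfolding mu_def d_def using npos by simp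
  have mud: "mu = real n * d" unfolding mu_def d_def by simp
  have q: "(mu - real n * u) / (real n * w) = (d - u) / w" unfolding mud using npos w
    by (simp add: field_simps)
  have iff1: "(d - u) / w < v \<longleftrightarrow> d < u + v * w" using w by (simp add: divide_less_eq algebra_simps)
  have iff2: "v < (d - u) / w \<longleftrightarrow> u + v * w < d" using w by (simp add: less_divide_eq algebra_simps)
  have ud': "u \<noteq> d" "u + v * w \<noteq> d" using ud uvd unfolding d_def by auto
  have f4e: "f4 n mu (\<lambda>_. 1) u v w =
     (if (0 < u \<and> u < d \<and> d < u + v * w) \<or> (d < u \<and> 0 < v) then Kf n u v w * (exp (- mu) + exp mu)
      else if 0 < u \<and> u < d \<and> 0 < v \<and> u + v * w < d then Kf n u v w * exp (- mu) else 0)"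
    unfolding f4_def Let_def f4_one_Kf[OF n] mu_n q iff1 iff2 using w by simp
  have A: "\<mu>2 \<le> \<mu>1 + \<sigma> * u + \<sigma> * v * w \<longleftrightarrow> (\<mu>2 - \<mu>1) / \<sigma> \<le> u + v * w"
    using s by (simp add: divide_le_eq algebra_simps)
  have B: "\<mu>1 \<le> \<mu>2 + \<sigma> * u + \<sigma> * v * w \<longleftrightarrow> (\<mu>1 - \<mu>2) / \<sigma> \<le> u + v * w"
    using s by (simp add: divide_le_eq algebra_simps)
  have vw: "v * w > 0" using v w by simp
  show ?thesis
  proof (cases "\<mu>1 \<le> \<mu>2")
    case True
    have dd: "(\<mu>2 - \<mu>1) / \<sigma> = d" "(\<mu>1 - \<mu>2) / \<sigma> = - d" using True s unfolding d_def by (auto simp: max_def min_def field_simps)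
    have e1: "exp (real n * (\<mu>2 - \<mu>1) / \<sigma>) = exp mu" "exp (real n * (\<mu>1 - \<mu>2) / \<sigma>) = exp (- mu)"
      using dd unfolding mud by (simp_all add: times_divide_eq_right[symmetric])
    show ?thesis unfolding mu_def[symmetric] f4e A B dd e1
      using u v vw d0 ud' by (auto simp: algebra_simps)
  next
    case False
    have dd: "(\<mu>1 - \<mu>2) / \<sigma> = d" "(\<mu>2 - \<mu>1) / \<sigma> = - d" using False s unfolding d_def by (auto simp: max_def min_def field_simps)
    have e1: "exp (real n * (\<mu>1 - \<mu>2) / \<sigma>) = exp mu" "exp (real n * (\<mu>2 - \<mu>1) / \<sigma>) = exp (- mu)"
      using dd unfolding mud by (simp_all add: times_divide_eq_right[symmetric])
    show ?thesis unfolding mu_def[symmetric] f4e A B dd e1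
      using u v vw d0 ud' by (auto simp: algebra_simps)
  qed
qed

lemma f4_zero:
  assumes "u < 0 \<or> v < 0 \<or> w < 0" and s: "\<sigma> > 0" and n: "n \<ge> 2"
  shows "f4 n (real n * (max \<mu>1 \<mu>2 - min \<mu>1 \<mu>2) / \<sigma>) f u v w = 0"
proof -
  have npos: "real n > 0" using n by simp
  have "real n * (max \<mu>1 \<mu>2 - min \<mu>1 \<mu>2) / \<sigma> / real n \<ge> 0" using s npos by simp
  moreover have "w > 0 \<Longrightarrow> 0 < u \<Longrightarrow> u < real n * (max \<mu>1 \<mu>2 - min \<mu>1 \<mu>2) / \<sigma> / real n \<Longrightarrow>
     (real n * (max \<mu>1 \<mu>2 - min \<mu>1 \<mu>2) / \<sigma> - real n * u) / (real n * w) > 0"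
    using npos s by (simp add: field_simps)
  ultimately show ?thesis using assms(1) unfolding f4_def Let_def
    by (auto simp: not_less)
qed

definition Hf :: "real \<Rightarrow> real \<Rightarrow> real \<Rightarrow> real \<Rightarrow> real \<Rightarrow> real \<Rightarrow> (real \<times> real) \<times> real" where
  "Hf \<mu>1 \<mu>2 \<sigma> m1 m2 s = (((min m1 m2 - ((if m1 \<le> m2 then \<mu>1 else 0) + (if m2 < m1 then \<mu>2 else 0))) / \<sigma>, s / \<sigma>),
     (max m1 m2 - min m1 m2) / s)"

lemma Hf_measurable'[measurable (raw)]:
  assumes [measurable]: "f \<in> borel_measurable M" "g \<in> borel_measurable M" "h \<in> borel_measurable M"
  shows "(\<lambda>x. Hf \<mu>1 \<mu>2 \<sigma> (f x) (g x) (h x)) \<in> borel_measurable M"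
  unfolding Hf_def by measurable

lemma core_S2:
  fixes \<phi> :: "(real \<times> real) \<times> real \<Rightarrow> ennreal"
  assumes s: "\<sigma> > 0" and n: "n \<ge> 2" and [measurable]: "\<phi> \<in> borel_measurable borel"
  shows "(\<integral>\<^sup>+m1. ennreal (sexp \<mu>1 (real n * (1 / \<sigma>)) m1) * Tint (1 / \<sigma>) n (\<lambda>t1.
            \<integral>\<^sup>+m2. ennreal (sexp \<mu>2 (real n * (1 / \<sigma>)) m2) * Tint (1 / \<sigma>) n (\<lambda>t2. \<phi> (Hf \<mu>1 \<mu>2 \<sigma> m1 m2 (t1 + t2))) \<partial>lborel) \<partial>lborel) =
    (\<integral>\<^sup>+m1. \<integral>\<^sup>+m2. \<integral>\<^sup>+s. ennreal (sexp \<mu>1 (real n * (1 / \<sigma>)) m1 * sexp \<mu>2 (real n * (1 / \<sigma>)) m2 * erlang_density (2 * n - 3) (1 / \<sigma>) s) *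
        \<phi> (Hf \<mu>1 \<mu>2 \<sigma> m1 m2 s) \<partial>lborel \<partial>lborel \<partial>lborel)"
proof -
  let ?r = "real n * (1 / \<sigma>)"
  let ?E = "\<lambda>t. ennreal (erlang_density (n - 2) (1 / \<sigma>) t)"
  have r: "1 / \<sigma> > 0" using s by simp
  have T: "Tint (1 / \<sigma>) n h = (\<integral>\<^sup>+t. ?E t * h t \<partial>lborel)" for h
    using n by (simp add: Tint_def)
  have N: "Suc (n - 2 + (n - 2)) = 2 * n - 3" using n by simp
  have cv: "(\<integral>\<^sup>+t1. ?E t1 * (\<integral>\<^sup>+t2. ?E t2 * \<phi> (Hf \<mu>1 \<mu>2 \<sigma> m1 m2 (t1 + t2)) \<partial>lborel) \<partial>lborel) =
         (\<integral>\<^sup>+s. ennreal (erlang_density (2 * n - 3) (1 / \<sigma>) s) * \<phi> (Hf \<mu>1 \<mu>2 \<sigma> m1 m2 s) \<partial>lborel)" for m1 m2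
  proof -
    have "(\<integral>\<^sup>+t1. ?E t1 * (\<integral>\<^sup>+t2. ?E t2 * \<phi> (Hf \<mu>1 \<mu>2 \<sigma> m1 m2 (t1 + t2)) \<partial>lborel) \<partial>lborel) =
         (\<integral>\<^sup>+s. ennreal (erlang_density (Suc (n - 2 + (n - 2))) (1 / \<sigma>) s) * \<phi> (Hf \<mu>1 \<mu>2 \<sigma> m1 m2 s) \<partial>lborel)"
      by (rule conv2[OF r]) measurable
    then show ?thesis by (simp only: N)
  qed
  have inner: "(\<integral>\<^sup>+t1. ?E t1 * (\<integral>\<^sup>+m2. ennreal (sexp \<mu>2 ?r m2) * (\<integral>\<^sup>+t2. ?E t2 * \<phi> (Hf \<mu>1 \<mu>2 \<sigma> m1 m2 (t1 + t2)) \<partial>lborel) \<partial>lborel) \<partial>lborel) =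
     (\<integral>\<^sup>+m2. ennreal (sexp \<mu>2 ?r m2) * (\<integral>\<^sup>+s. ennreal (erlang_density (2 * n - 3) (1 / \<sigma>) s) * \<phi> (Hf \<mu>1 \<mu>2 \<sigma> m1 m2 s) \<partial>lborel) \<partial>lborel)" for m1
  proof -
    have "(\<integral>\<^sup>+t1. ?E t1 * (\<integral>\<^sup>+m2. ennreal (sexp \<mu>2 ?r m2) * (\<integral>\<^sup>+t2. ?E t2 * \<phi> (Hf \<mu>1 \<mu>2 \<sigma> m1 m2 (t1 + t2)) \<partial>lborel) \<partial>lborel) \<partial>lborel) =
       (\<integral>\<^sup>+t1. \<integral>\<^sup>+m2. ennreal (sexp \<mu>2 ?r m2) * (?E t1 * (\<integral>\<^sup>+t2. ?E t2 * \<phi> (Hf \<mu>1 \<mu>2 \<sigma> m1 m2 (t1 + t2)) \<partial>lborel)) \<partial>lborel \<partial>lborel)"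
      by (intro nn_integral_cong) (subst nn_integral_cmult[symmetric], measurable, simp add: mult_ac)
    also have "\<dots> = (\<integral>\<^sup>+m2. \<integral>\<^sup>+t1. ennreal (sexp \<mu>2 ?r m2) * (?E t1 * (\<integral>\<^sup>+t2. ?E t2 * \<phi> (Hf \<mu>1 \<mu>2 \<sigma> m1 m2 (t1 + t2)) \<partial>lborel)) \<partial>lborel \<partial>lborel)"
      by (rule lborel_pair.Fubini') measurable
    also have "\<dots> = (\<integral>\<^sup>+m2. ennreal (sexp \<mu>2 ?r m2) * (\<integral>\<^sup>+t1. ?E t1 * (\<integral>\<^sup>+t2. ?E t2 * \<phi> (Hf \<mu>1 \<mu>2 \<sigma> m1 m2 (t1 + t2)) \<partial>lborel) \<partial>lborel) \<partial>lborel)"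
      by (intro nn_integral_cong) (rule nn_integral_cmult, measurable)
    also have "\<dots> = (\<integral>\<^sup>+m2. ennreal (sexp \<mu>2 ?r m2) * (\<integral>\<^sup>+s. ennreal (erlang_density (2 * n - 3) (1 / \<sigma>) s) * \<phi> (Hf \<mu>1 \<mu>2 \<sigma> m1 m2 s) \<partial>lborel) \<partial>lborel)"
      by (simp only: cv)
    finally show ?thesis .
  qed
  have "(\<integral>\<^sup>+m1. ennreal (sexp \<mu>1 ?r m1) * Tint (1 / \<sigma>) n (\<lambda>t1.
            \<integral>\<^sup>+m2. ennreal (sexp \<mu>2 ?r m2) * Tint (1 / \<sigma>) n (\<lambda>t2. \<phi> (Hf \<mu>1 \<mu>2 \<sigma> m1 m2 (t1 + t2))) \<partial>lborel) \<partial>lborel) =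
     (\<integral>\<^sup>+m1. ennreal (sexp \<mu>1 ?r m1) * (\<integral>\<^sup>+m2. ennreal (sexp \<mu>2 ?r m2) * (\<integral>\<^sup>+s. ennreal (erlang_density (2 * n - 3) (1 / \<sigma>) s) * \<phi> (Hf \<mu>1 \<mu>2 \<sigma> m1 m2 s) \<partial>lborel) \<partial>lborel) \<partial>lborel)"
    unfolding T inner ..
  also have "\<dots> = (\<integral>\<^sup>+m1. \<integral>\<^sup>+m2. \<integral>\<^sup>+s. ennreal (sexp \<mu>1 ?r m1 * sexp \<mu>2 ?r m2 * erlang_density (2 * n - 3) (1 / \<sigma>) s) *
        \<phi> (Hf \<mu>1 \<mu>2 \<sigma> m1 m2 s) \<partial>lborel \<partial>lborel \<partial>lborel)"
  proof (intro nn_integral_cong)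
    fix m1 :: real
    have "(\<integral>\<^sup>+m2. ennreal (sexp \<mu>2 ?r m2) * (\<integral>\<^sup>+s. ennreal (erlang_density (2 * n - 3) (1 / \<sigma>) s) * \<phi> (Hf \<mu>1 \<mu>2 \<sigma> m1 m2 s) \<partial>lborel) \<partial>lborel) =
       (\<integral>\<^sup>+m2. \<integral>\<^sup>+s. ennreal (sexp \<mu>2 ?r m2) * (ennreal (erlang_density (2 * n - 3) (1 / \<sigma>) s) * \<phi> (Hf \<mu>1 \<mu>2 \<sigma> m1 m2 s)) \<partial>lborel \<partial>lborel)"
      by (intro nn_integral_cong) (rule nn_integral_cmult[symmetric], measurable)
    then have "ennreal (sexp \<mu>1 ?r m1) * (\<integral>\<^sup>+m2. ennreal (sexp \<mu>2 ?r m2) * (\<integral>\<^sup>+s. ennreal (erlang_density (2 * n - 3) (1 / \<sigma>) s) * \<phi> (Hf \<mu>1 \<mu>2 \<sigma> m1 m2 s) \<partial>lborel) \<partial>lborel) =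
       (\<integral>\<^sup>+m2. ennreal (sexp \<mu>1 ?r m1) * (\<integral>\<^sup>+s. ennreal (sexp \<mu>2 ?r m2) * (ennreal (erlang_density (2 * n - 3) (1 / \<sigma>) s) * \<phi> (Hf \<mu>1 \<mu>2 \<sigma> m1 m2 s)) \<partial>lborel) \<partial>lborel)"
      by (simp add: nn_integral_cmult[symmetric])
    also have "\<dots> = (\<integral>\<^sup>+m2. \<integral>\<^sup>+s. ennreal (sexp \<mu>1 ?r m1 * sexp \<mu>2 ?r m2 * erlang_density (2 * n - 3) (1 / \<sigma>) s) *
        \<phi> (Hf \<mu>1 \<mu>2 \<sigma> m1 m2 s) \<partial>lborel \<partial>lborel)"
      using s by (intro nn_integral_cong) (subst nn_integral_cmult[symmetric], measurable, simp add: ennreal_mult sexp_nonneg mult_ac)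
    finally show "ennreal (sexp \<mu>1 ?r m1) * (\<integral>\<^sup>+m2. ennreal (sexp \<mu>2 ?r m2) * (\<integral>\<^sup>+s. ennreal (erlang_density (2 * n - 3) (1 / \<sigma>) s) * \<phi> (Hf \<mu>1 \<mu>2 \<sigma> m1 m2 s) \<partial>lborel) \<partial>lborel) =
       (\<integral>\<^sup>+m2. \<integral>\<^sup>+s. ennreal (sexp \<mu>1 ?r m1 * sexp \<mu>2 ?r m2 * erlang_density (2 * n - 3) (1 / \<sigma>) s) *
        \<phi> (Hf \<mu>1 \<mu>2 \<sigma> m1 m2 s) \<partial>lborel \<partial>lborel)" .
  qed
  finally show ?thesis .
qed

lemma nn3_add:
  fixes f g :: "real \<times> real \<times> real \<Rightarrow> ennreal"
  assumes [measurable]: "f \<in> borel_measurable (borel \<Otimes>\<^sub>M borel \<Otimes>\<^sub>M borel)" "g \<in> borel_measurable (borel \<Otimes>\<^sub>M borel \<Otimes>\<^sub>M borel)"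
  shows "(\<integral>\<^sup>+x. \<integral>\<^sup>+y. \<integral>\<^sup>+z. f (x, y, z) + g (x, y, z) \<partial>lborel \<partial>lborel \<partial>lborel) =
    (\<integral>\<^sup>+x. \<integral>\<^sup>+y. \<integral>\<^sup>+z. f (x, y, z) \<partial>lborel \<partial>lborel \<partial>lborel) + (\<integral>\<^sup>+x. \<integral>\<^sup>+y. \<integral>\<^sup>+z. g (x, y, z) \<partial>lborel \<partial>lborel \<partial>lborel)"
proof -
  have "(\<integral>\<^sup>+x. \<integral>\<^sup>+y. \<integral>\<^sup>+z. f (x, y, z) + g (x, y, z) \<partial>lborel \<partial>lborel \<partial>lborel) =
    (\<integral>\<^sup>+x. \<integral>\<^sup>+y. (\<integral>\<^sup>+z. f (x, y, z) \<partial>lborel) + (\<integral>\<^sup>+z. g (x, y, z) \<partial>lborel) \<partial>lborel \<partial>lborel)"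
    by (intro nn_integral_cong nn_integral_add) measurable
  also have "\<dots> = (\<integral>\<^sup>+x. (\<integral>\<^sup>+y. \<integral>\<^sup>+z. f (x, y, z) \<partial>lborel \<partial>lborel) + (\<integral>\<^sup>+y. \<integral>\<^sup>+z. g (x, y, z) \<partial>lborel \<partial>lborel) \<partial>lborel)"
    by (intro nn_integral_cong nn_integral_add) measurable
  also have "\<dots> = (\<integral>\<^sup>+x. \<integral>\<^sup>+y. \<integral>\<^sup>+z. f (x, y, z) \<partial>lborel \<partial>lborel \<partial>lborel) + (\<integral>\<^sup>+x. \<integral>\<^sup>+y. \<integral>\<^sup>+z. g (x, y, z) \<partial>lborel \<partial>lborel \<partial>lborel)"
    by (intro nn_integral_add) measurable
  finally show ?thesis .
qed

lemma swap12:
  fixes f :: "real \<times> real \<times> real \<Rightarrow> ennreal"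
  assumes [measurable]: "f \<in> borel_measurable (borel \<Otimes>\<^sub>M borel \<Otimes>\<^sub>M borel)"
  shows "(\<integral>\<^sup>+x. \<integral>\<^sup>+y. \<integral>\<^sup>+z. f (x, y, z) \<partial>lborel \<partial>lborel \<partial>lborel) = (\<integral>\<^sup>+y. \<integral>\<^sup>+x. \<integral>\<^sup>+z. f (x, y, z) \<partial>lborel \<partial>lborel \<partial>lborel)"
  by (rule lborel_pair.Fubini') measurable

lemma swap23:
  fixes f :: "real \<times> real \<times> real \<Rightarrow> ennreal"
  assumes [measurable]: "f \<in> borel_measurable (borel \<Otimes>\<^sub>M borel \<Otimes>\<^sub>M borel)"
  shows "(\<integral>\<^sup>+x. \<integral>\<^sup>+y. \<integral>\<^sup>+z. f (x, y, z) \<partial>lborel \<partial>lborel \<partial>lborel) = (\<integral>\<^sup>+x. \<integral>\<^sup>+z. \<integral>\<^sup>+y. f (x, y, z) \<partial>lborel \<partial>lborel \<partial>lborel)"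
  by (intro nn_integral_cong lborel_pair.Fubini') measurable

lemma lborel3:
  fixes f :: "(real \<times> real) \<times> real \<Rightarrow> ennreal"
  assumes [measurable]: "f \<in> borel_measurable borel"
  shows "(\<integral>\<^sup>+z. f z \<partial>lborel) = (\<integral>\<^sup>+u. \<integral>\<^sup>+v. \<integral>\<^sup>+w. f ((u, v), w) \<partial>lborel \<partial>lborel \<partial>lborel)"
proof -
  have "(\<integral>\<^sup>+z. f z \<partial>lborel) = (\<integral>\<^sup>+z. f z \<partial>(lborel \<Otimes>\<^sub>M lborel))"
    by (simp only: lborel_prod)
  also have "\<dots> = (\<integral>\<^sup>+x. \<integral>\<^sup>+w. f (x, w) \<partial>lborel \<partial>lborel)"
    by (rule lborel.nn_integral_fst[symmetric]) (simp only: lborel_prod, measurable)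
  also have "\<dots> = (\<integral>\<^sup>+x. \<integral>\<^sup>+w. f (x, w) \<partial>lborel \<partial>(lborel \<Otimes>\<^sub>M lborel))"
    by (simp only: lborel_prod)
  also have "\<dots> = (\<integral>\<^sup>+u. \<integral>\<^sup>+v. \<integral>\<^sup>+w. f ((u, v), w) \<partial>lborel \<partial>lborel \<partial>lborel)"
    by (rule lborel.nn_integral_fst[symmetric]) (simp only: lborel_prod, measurable)
  finally show ?thesis .
qed

lemma Kf_nonneg: "v > 0 \<Longrightarrow> Kf n u v w \<ge> 0"
  unfolding Kf_def by simp

lemma ptw:
  fixes \<phi> :: "(real \<times> real) \<times> real \<Rightarrow> ennreal"
  assumes s: "\<sigma> > 0" and n: "n \<ge> 2" and u0: "u \<noteq> 0" and ud: "u \<noteq> (max \<mu>1 \<mu>2 - min \<mu>1 \<mu>2) / \<sigma>"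
    and v0: "v \<noteq> 0" and w0: "w \<noteq> 0" and wd: "w \<noteq> ((max \<mu>1 \<mu>2 - min \<mu>1 \<mu>2) / \<sigma> - u) / v"
  shows "ennreal (\<sigma> ^ 3 * v) * indicator {0<..} v *
     (ennreal (erlang_density (2 * n - 3) (1 / \<sigma>) (\<sigma> * v) * sexp \<mu>1 (real n * (1 / \<sigma>)) (\<mu>1 + \<sigma> * u) * sexp \<mu>2 (real n * (1 / \<sigma>)) (\<mu>1 + \<sigma> * u + \<sigma> * v * w)) *
      indicator {\<mu>1 + \<sigma> * u..} (\<mu>1 + \<sigma> * u + \<sigma> * v * w) *
      \<phi> (((\<mu>1 + \<sigma> * u - \<mu>1) / \<sigma>, \<sigma> * v / \<sigma>), (\<mu>1 + \<sigma> * u + \<sigma> * v * w - (\<mu>1 + \<sigma> * u)) / (\<sigma> * v))) +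
   ennreal (\<sigma> ^ 3 * v) * indicator {0<..} v *
     (ennreal (erlang_density (2 * n - 3) (1 / \<sigma>) (\<sigma> * v) * sexp \<mu>2 (real n * (1 / \<sigma>)) (\<mu>2 + \<sigma> * u) * sexp \<mu>1 (real n * (1 / \<sigma>)) (\<mu>2 + \<sigma> * u + \<sigma> * v * w)) *
      indicator {\<mu>2 + \<sigma> * u<..} (\<mu>2 + \<sigma> * u + \<sigma> * v * w) *
      \<phi> (((\<mu>2 + \<sigma> * u - \<mu>2) / \<sigma>, \<sigma> * v / \<sigma>), (\<mu>2 + \<sigma> * u + \<sigma> * v * w - (\<mu>2 + \<sigma> * u)) / (\<sigma> * v))) =
   ennreal (f4 n (real n * (max \<mu>1 \<mu>2 - min \<mu>1 \<mu>2) / \<sigma>) (\<lambda>_. 1) u v w) * \<phi> ((u, v), w)"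
proof -
  let ?\<rho> = "real n * (1 / \<sigma>)"
  let ?E = "erlang_density (2 * n - 3) (1 / \<sigma>) (\<sigma> * v)"
  consider "v < 0" | "v > 0 \<and> u < 0" | "v > 0 \<and> u > 0 \<and> w < 0" | "v > 0 \<and> u > 0 \<and> w > 0"
    using u0 v0 w0 by fastforce
  then show ?thesis
  proof cases
    case 1
    then show ?thesis using f4_zero[of u v w \<sigma> n \<mu>1 \<mu>2 "\<lambda>_. 1"] s n by simp
  next
    case 2
    then have "\<sigma> * u < 0" using s by (simp add: mult_pos_neg)
    then have "sexp \<mu>1 ?\<rho> (\<mu>1 + \<sigma> * u) = 0" "sexp \<mu>2 ?\<rho> (\<mu>2 + \<sigma> * u) = 0"
      by (auto simp: sexp_def)
    then show ?thesis using 2 f4_zero[of u v w \<sigma> n \<mu>1 \<mu>2 "\<lambda>_. 1"] s n by simp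
  next
    case 3
    then have "\<sigma> * v * w < 0" using s by (simp add: mult_pos_neg)
    then show ?thesis using 3 f4_zero[of u v w \<sigma> n \<mu>1 \<mu>2 "\<lambda>_. 1"] s n by (simp add: indicator_def)
  next
    case 4
    then have u: "u > 0" and v: "v > 0" and w: "w > 0" by auto
    have svw: "\<sigma> * v * w > 0" using s v w by simp
    have arg1: "(((\<mu>1 + \<sigma> * u - \<mu>1) / \<sigma>, \<sigma> * v / \<sigma>), (\<mu>1 + \<sigma> * u + \<sigma> * v * w - (\<mu>1 + \<sigma> * u)) / (\<sigma> * v)) = ((u, v), w)"
      using s v by simp
    have arg2: "(((\<mu>2 + \<sigma> * u - \<mu>2) / \<sigma>, \<sigma> * v / \<sigma>), (\<mu>2 + \<sigma> * u + \<sigma> * v * w - (\<mu>2 + \<sigma> * u)) / (\<sigma> * v)) = ((u, v), w)"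
      using s v by simp
    have uvd: "u + v * w \<noteq> (max \<mu>1 \<mu>2 - min \<mu>1 \<mu>2) / \<sigma>"
    proof
      assume "u + v * w = (max \<mu>1 \<mu>2 - min \<mu>1 \<mu>2) / \<sigma>"
      then have "w = ((max \<mu>1 \<mu>2 - min \<mu>1 \<mu>2) / \<sigma> - u) / v" using v by (simp add: field_simps)
      then show False using wd by simp
    qed
    have r1: "\<sigma> ^ 3 * v * (?E * sexp \<mu>1 ?\<rho> (\<mu>1 + \<sigma> * u) * sexp \<mu>2 ?\<rho> (\<mu>1 + \<sigma> * u + \<sigma> * v * w)) =
      (if \<mu>2 \<le> \<mu>1 + \<sigma> * u + \<sigma> * v * w then Kf n u v w * exp (real n * (\<mu>2 - \<mu>1) / \<sigma>) else 0)"
      by (rule region_val[OF s n less_imp_le[OF u] v])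
    have r2: "\<sigma> ^ 3 * v * (?E * sexp \<mu>2 ?\<rho> (\<mu>2 + \<sigma> * u) * sexp \<mu>1 ?\<rho> (\<mu>2 + \<sigma> * u + \<sigma> * v * w)) =
      (if \<mu>1 \<le> \<mu>2 + \<sigma> * u + \<sigma> * v * w then Kf n u v w * exp (real n * (\<mu>1 - \<mu>2) / \<sigma>) else 0)"
      by (rule region_val[OF s n less_imp_le[OF u] v])
    have pos: "0 \<le> ?E * sexp \<mu>1 ?\<rho> (\<mu>1 + \<sigma> * u) * sexp \<mu>2 ?\<rho> (\<mu>1 + \<sigma> * u + \<sigma> * v * w)"
      "0 \<le> ?E * sexp \<mu>2 ?\<rho> (\<mu>2 + \<sigma> * u) * sexp \<mu>1 ?\<rho> (\<mu>2 + \<sigma> * u + \<sigma> * v * w)"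
      using s by (auto intro!: mult_nonneg_nonneg sexp_nonneg)
    have e1: "ennreal (\<sigma> ^ 3 * v) * ennreal (?E * sexp \<mu>1 ?\<rho> (\<mu>1 + \<sigma> * u) * sexp \<mu>2 ?\<rho> (\<mu>1 + \<sigma> * u + \<sigma> * v * w)) =
       ennreal (if \<mu>2 \<le> \<mu>1 + \<sigma> * u + \<sigma> * v * w then Kf n u v w * exp (real n * (\<mu>2 - \<mu>1) / \<sigma>) else 0)"
    proof -
      have "ennreal (\<sigma> ^ 3 * v) * ennreal (?E * sexp \<mu>1 ?\<rho> (\<mu>1 + \<sigma> * u) * sexp \<mu>2 ?\<rho> (\<mu>1 + \<sigma> * u + \<sigma> * v * w)) =
        ennreal (\<sigma> ^ 3 * v * (?E * sexp \<mu>1 ?\<rho> (\<mu>1 + \<sigma> * u) * sexp \<mu>2 ?\<rho> (\<mu>1 + \<sigma> * u + \<sigma> * v * w)))"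
        by (rule ennreal_mult[symmetric]) (use s v pos(1) in auto)
      also note r1
      finally show ?thesis .
    qed
    have e2: "ennreal (\<sigma> ^ 3 * v) * ennreal (?E * sexp \<mu>2 ?\<rho> (\<mu>2 + \<sigma> * u) * sexp \<mu>1 ?\<rho> (\<mu>2 + \<sigma> * u + \<sigma> * v * w)) =
       ennreal (if \<mu>1 \<le> \<mu>2 + \<sigma> * u + \<sigma> * v * w then Kf n u v w * exp (real n * (\<mu>1 - \<mu>2) / \<sigma>) else 0)"
    proof -
      have "ennreal (\<sigma> ^ 3 * v) * ennreal (?E * sexp \<mu>2 ?\<rho> (\<mu>2 + \<sigma> * u) * sexp \<mu>1 ?\<rho> (\<mu>2 + \<sigma> * u + \<sigma> * v * w)) =
        ennreal (\<sigma> ^ 3 * v * (?E * sexp \<mu>2 ?\<rho> (\<mu>2 + \<sigma> * u) * sexp \<mu>1 ?\<rho> (\<mu>2 + \<sigma> * u + \<sigma> * v * w)))"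
        by (rule ennreal_mult[symmetric]) (use s v pos(2) in auto)
      also note r2
      finally show ?thesis .
    qed
    have sum: "ennreal (if \<mu>2 \<le> \<mu>1 + \<sigma> * u + \<sigma> * v * w then Kf n u v w * exp (real n * (\<mu>2 - \<mu>1) / \<sigma>) else 0) +
       ennreal (if \<mu>1 \<le> \<mu>2 + \<sigma> * u + \<sigma> * v * w then Kf n u v w * exp (real n * (\<mu>1 - \<mu>2) / \<sigma>) else 0) =
       ennreal (f4 n (real n * (max \<mu>1 \<mu>2 - min \<mu>1 \<mu>2) / \<sigma>) (\<lambda>_. 1) u v w)"
      unfolding f4_val[OF s n u v w ud uvd] using Kf_nonneg[OF v, of n u w]
      by (subst ennreal_plus[symmetric]) (auto simp: distrib_left)
    have "ennreal (\<sigma> ^ 3 * v) * indicator {0<..} v *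
     (ennreal (?E * sexp \<mu>1 ?\<rho> (\<mu>1 + \<sigma> * u) * sexp \<mu>2 ?\<rho> (\<mu>1 + \<sigma> * u + \<sigma> * v * w)) *
      indicator {\<mu>1 + \<sigma> * u..} (\<mu>1 + \<sigma> * u + \<sigma> * v * w) *
      \<phi> (((\<mu>1 + \<sigma> * u - \<mu>1) / \<sigma>, \<sigma> * v / \<sigma>), (\<mu>1 + \<sigma> * u + \<sigma> * v * w - (\<mu>1 + \<sigma> * u)) / (\<sigma> * v))) =
      ennreal (\<sigma> ^ 3 * v) * ennreal (?E * sexp \<mu>1 ?\<rho> (\<mu>1 + \<sigma> * u) * sexp \<mu>2 ?\<rho> (\<mu>1 + \<sigma> * u + \<sigma> * v * w)) * \<phi> ((u, v), w)"
      unfolding arg1 using v svw by (simp add: indicator_def mult.assoc)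
    moreover have "ennreal (\<sigma> ^ 3 * v) * indicator {0<..} v *
     (ennreal (?E * sexp \<mu>2 ?\<rho> (\<mu>2 + \<sigma> * u) * sexp \<mu>1 ?\<rho> (\<mu>2 + \<sigma> * u + \<sigma> * v * w)) *
      indicator {\<mu>2 + \<sigma> * u<..} (\<mu>2 + \<sigma> * u + \<sigma> * v * w) *
      \<phi> (((\<mu>2 + \<sigma> * u - \<mu>2) / \<sigma>, \<sigma> * v / \<sigma>), (\<mu>2 + \<sigma> * u + \<sigma> * v * w - (\<mu>2 + \<sigma> * u)) / (\<sigma> * v))) =
      ennreal (\<sigma> ^ 3 * v) * ennreal (?E * sexp \<mu>2 ?\<rho> (\<mu>2 + \<sigma> * u) * sexp \<mu>1 ?\<rho> (\<mu>2 + \<sigma> * u + \<sigma> * v * w)) * \<phi> ((u, v), w)"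
      unfolding arg2 using v svw by (simp add: indicator_def mult.assoc)
    ultimately show ?thesis
      unfolding e1 e2 sum[symmetric] by (simp add: distrib_right)
  qed
qed

lemma erlang_nonpos_zero: "N \<ge> 1 \<Longrightarrow> s \<le> 0 \<Longrightarrow> erlang_density N r s = 0"
  by (cases "s = 0") (auto simp: erlang_density_def)

lemma core_S3:
  fixes \<phi> :: "(real \<times> real) \<times> real \<Rightarrow> ennreal"
  assumes s: "\<sigma> > 0" and n: "n \<ge> 2" and [measurable]: "\<phi> \<in> borel_measurable borel"
  shows "(\<integral>\<^sup>+m1. \<integral>\<^sup>+m2. \<integral>\<^sup>+s. ennreal (sexp \<mu>1 (real n * (1 / \<sigma>)) m1 * sexp \<mu>2 (real n * (1 / \<sigma>)) m2 * erlang_density (2 * n - 3) (1 / \<sigma>) s) *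
        \<phi> (Hf \<mu>1 \<mu>2 \<sigma> m1 m2 s) \<partial>lborel \<partial>lborel \<partial>lborel) =
    (\<integral>\<^sup>+z. ennreal (f4 n (real n * (max \<mu>1 \<mu>2 - min \<mu>1 \<mu>2) / \<sigma>) (\<lambda>_. 1) (fst (fst z)) (snd (fst z)) (snd z)) * \<phi> z \<partial>lborel)"
proof -
  define d1 where "d1 = sexp \<mu>1 (real n * (1 / \<sigma>))"
  define d2 where "d2 = sexp \<mu>2 (real n * (1 / \<sigma>))"
  define e where "e = erlang_density (2 * n - 3) (1 / \<sigma>)"
  have [measurable]: "d1 \<in> borel_measurable borel" "d2 \<in> borel_measurable borel" "e \<in> borel_measurable borel"
    unfolding d1_def d2_def e_def by measurable
  define F1 where "F1 = (\<lambda>(s, ma, mb). ennreal (e s * d1 ma * d2 mb) * indicator {ma..} mb * \<phi> (((ma - \<mu>1) / \<sigma>, s / \<sigma>), (mb - ma) / s))"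
  define F2 where "F2 = (\<lambda>(s, ma, mb). ennreal (e s * d2 ma * d1 mb) * indicator {ma<..} mb * \<phi> (((ma - \<mu>2) / \<sigma>, s / \<sigma>), (mb - ma) / s))"
  have F1m[measurable]: "F1 \<in> borel_measurable (borel \<Otimes>\<^sub>M borel \<Otimes>\<^sub>M borel)" unfolding F1_def by measurable
  have F2m[measurable]: "F2 \<in> borel_measurable (borel \<Otimes>\<^sub>M borel \<Otimes>\<^sub>M borel)" unfolding F2_def by measurable
  define A where "A = (\<lambda>(m1::real, m2::real, s::real). indicator {0<..} s * F1 (s, m1, m2))"
  define B where "B = (\<lambda>(m1::real, m2::real, s::real). indicator {0<..} s * F2 (s, m2, m1))"
  have Am[measurable]: "A \<in> borel_measurable (borel \<Otimes>\<^sub>M borel \<Otimes>\<^sub>M borel)" unfolding A_def by measurable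
  have Bm[measurable]: "B \<in> borel_measurable (borel \<Otimes>\<^sub>M borel \<Otimes>\<^sub>M borel)" unfolding B_def by measurable
  have split: "ennreal (d1 m1 * d2 m2 * e s) * \<phi> (Hf \<mu>1 \<mu>2 \<sigma> m1 m2 s) = A (m1, m2, s) + B (m1, m2, s)" for m1 m2 s
  proof (cases "s > 0")
    case False
    then have "e s = 0" unfolding e_def using n by (intro erlang_nonpos_zero) auto
    then show ?thesis using False by (simp add: A_def B_def)
  next
    case True
    show ?thesis
    proof (cases "m1 \<le> m2")
      case True
      then show ?thesis using \<open>s > 0\<close> by (simp add: A_def B_def F1_def F2_def Hf_def mult_ac)
    next
      case False
      then show ?thesis using \<open>s > 0\<close> by (simp add: A_def B_def F1_def F2_def Hf_def mult_ac)
    qed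
  qed
  have "(\<integral>\<^sup>+m1. \<integral>\<^sup>+m2. \<integral>\<^sup>+s. ennreal (d1 m1 * d2 m2 * e s) * \<phi> (Hf \<mu>1 \<mu>2 \<sigma> m1 m2 s) \<partial>lborel \<partial>lborel \<partial>lborel) =
     (\<integral>\<^sup>+m1. \<integral>\<^sup>+m2. \<integral>\<^sup>+s. A (m1, m2, s) + B (m1, m2, s) \<partial>lborel \<partial>lborel \<partial>lborel)"
    by (simp only: split)
  also have "\<dots> = (\<integral>\<^sup>+m1. \<integral>\<^sup>+m2. \<integral>\<^sup>+s. A (m1, m2, s) \<partial>lborel \<partial>lborel \<partial>lborel) + (\<integral>\<^sup>+m1. \<integral>\<^sup>+m2. \<integral>\<^sup>+s. B (m1, m2, s) \<partial>lborel \<partial>lborel \<partial>lborel)"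
    by (rule nn3_add[OF Am Bm])
  also have "(\<integral>\<^sup>+m1. \<integral>\<^sup>+m2. \<integral>\<^sup>+s. A (m1, m2, s) \<partial>lborel \<partial>lborel \<partial>lborel) =
     (\<integral>\<^sup>+v. \<integral>\<^sup>+u. \<integral>\<^sup>+w. ennreal (\<sigma> ^ 3 * v) * indicator {0<..} v * F1 (\<sigma> * v, \<mu>1 + \<sigma> * u, \<mu>1 + \<sigma> * u + \<sigma> * v * w) \<partial>lborel \<partial>lborel \<partial>lborel)"
  proof -
    have "(\<integral>\<^sup>+m1. \<integral>\<^sup>+m2. \<integral>\<^sup>+s. A (m1, m2, s) \<partial>lborel \<partial>lborel \<partial>lborel) = (\<integral>\<^sup>+m1. \<integral>\<^sup>+s. \<integral>\<^sup>+m2. A (m1, m2, s) \<partial>lborel \<partial>lborel \<partial>lborel)"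
      by (rule swap23[OF Am])
    also have "\<dots> = (\<integral>\<^sup>+s. \<integral>\<^sup>+m1. \<integral>\<^sup>+m2. A (m1, m2, s) \<partial>lborel \<partial>lborel \<partial>lborel)"
      using swap12[of "\<lambda>(m1, s, m2). A (m1, m2, s)"] by simp
    also have "\<dots> = (\<integral>\<^sup>+s. indicator {0<..} s * (\<integral>\<^sup>+ma. \<integral>\<^sup>+mb. F1 (s, ma, mb) \<partial>lborel \<partial>lborel) \<partial>lborel)"
      unfolding A_def by (simp add: nn_integral_cmult)
    also have "\<dots> = (\<integral>\<^sup>+v. \<integral>\<^sup>+u. \<integral>\<^sup>+w. ennreal (\<sigma> ^ 3 * v) * indicator {0<..} v * F1 (\<sigma> * v, \<mu>1 + \<sigma> * u, \<mu>1 + \<sigma> * u + \<sigma> * v * w) \<partial>lborel \<partial>lborel \<partial>lborel)"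
      by (rule subst3[OF s F1m])
    finally show ?thesis .
  qed
  also have "(\<integral>\<^sup>+m1. \<integral>\<^sup>+m2. \<integral>\<^sup>+s. B (m1, m2, s) \<partial>lborel \<partial>lborel \<partial>lborel) =
     (\<integral>\<^sup>+v. \<integral>\<^sup>+u. \<integral>\<^sup>+w. ennreal (\<sigma> ^ 3 * v) * indicator {0<..} v * F2 (\<sigma> * v, \<mu>2 + \<sigma> * u, \<mu>2 + \<sigma> * u + \<sigma> * v * w) \<partial>lborel \<partial>lborel \<partial>lborel)"
  proof -
    have "(\<integral>\<^sup>+m1. \<integral>\<^sup>+m2. \<integral>\<^sup>+s. B (m1, m2, s) \<partial>lborel \<partial>lborel \<partial>lborel) = (\<integral>\<^sup>+m1. \<integral>\<^sup>+s. \<integral>\<^sup>+m2. B (m1, m2, s) \<partial>lborel \<partial>lborel \<partial>lborel)"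
      by (rule swap23[OF Bm])
    also have "\<dots> = (\<integral>\<^sup>+s. \<integral>\<^sup>+m1. \<integral>\<^sup>+m2. B (m1, m2, s) \<partial>lborel \<partial>lborel \<partial>lborel)"
      using swap12[of "\<lambda>(m1, s, m2). B (m1, m2, s)"] by simp
    also have "\<dots> = (\<integral>\<^sup>+s. \<integral>\<^sup>+m2. \<integral>\<^sup>+m1. B (m1, m2, s) \<partial>lborel \<partial>lborel \<partial>lborel)"
      using swap23[of "\<lambda>(s, m1, m2). B (m1, m2, s)"] by simp
    also have "\<dots> = (\<integral>\<^sup>+s. indicator {0<..} s * (\<integral>\<^sup>+ma. \<integral>\<^sup>+mb. F2 (s, ma, mb) \<partial>lborel \<partial>lborel) \<partial>lborel)"
      unfolding B_def by (simp add: nn_integral_cmult)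
    also have "\<dots> = (\<integral>\<^sup>+v. \<integral>\<^sup>+u. \<integral>\<^sup>+w. ennreal (\<sigma> ^ 3 * v) * indicator {0<..} v * F2 (\<sigma> * v, \<mu>2 + \<sigma> * u, \<mu>2 + \<sigma> * u + \<sigma> * v * w) \<partial>lborel \<partial>lborel \<partial>lborel)"
      by (rule subst3[OF s F2m])
    finally show ?thesis .
  qed
  also have "(\<integral>\<^sup>+v. \<integral>\<^sup>+u. \<integral>\<^sup>+w. ennreal (\<sigma> ^ 3 * v) * indicator {0<..} v * F1 (\<sigma> * v, \<mu>1 + \<sigma> * u, \<mu>1 + \<sigma> * u + \<sigma> * v * w) \<partial>lborel \<partial>lborel \<partial>lborel) +
     (\<integral>\<^sup>+v. \<integral>\<^sup>+u. \<integral>\<^sup>+w. ennreal (\<sigma> ^ 3 * v) * indicator {0<..} v * F2 (\<sigma> * v, \<mu>2 + \<sigma> * u, \<mu>2 + \<sigma> * u + \<sigma> * v * w) \<partial>lborel \<partial>lborel \<partial>lborel) =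
     (\<integral>\<^sup>+v. \<integral>\<^sup>+u. \<integral>\<^sup>+w. ennreal (\<sigma> ^ 3 * v) * indicator {0<..} v * F1 (\<sigma> * v, \<mu>1 + \<sigma> * u, \<mu>1 + \<sigma> * u + \<sigma> * v * w) +
        ennreal (\<sigma> ^ 3 * v) * indicator {0<..} v * F2 (\<sigma> * v, \<mu>2 + \<sigma> * u, \<mu>2 + \<sigma> * u + \<sigma> * v * w) \<partial>lborel \<partial>lborel \<partial>lborel)"
    using nn3_add[of "\<lambda>(v, u, w). ennreal (\<sigma> ^ 3 * v) * indicator {0<..} v * F1 (\<sigma> * v, \<mu>1 + \<sigma> * u, \<mu>1 + \<sigma> * u + \<sigma> * v * w)"
       "\<lambda>(v, u, w). ennreal (\<sigma> ^ 3 * v) * indicator {0<..} v * F2 (\<sigma> * v, \<mu>2 + \<sigma> * u, \<mu>2 + \<sigma> * u + \<sigma> * v * w)"]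
    by simp
  also have "\<dots> = (\<integral>\<^sup>+u. \<integral>\<^sup>+v. \<integral>\<^sup>+w. ennreal (\<sigma> ^ 3 * v) * indicator {0<..} v * F1 (\<sigma> * v, \<mu>1 + \<sigma> * u, \<mu>1 + \<sigma> * u + \<sigma> * v * w) +
        ennreal (\<sigma> ^ 3 * v) * indicator {0<..} v * F2 (\<sigma> * v, \<mu>2 + \<sigma> * u, \<mu>2 + \<sigma> * u + \<sigma> * v * w) \<partial>lborel \<partial>lborel \<partial>lborel)"
    using swap12[of "\<lambda>(v, u, w). ennreal (\<sigma> ^ 3 * v) * indicator {0<..} v * F1 (\<sigma> * v, \<mu>1 + \<sigma> * u, \<mu>1 + \<sigma> * u + \<sigma> * v * w) +
        ennreal (\<sigma> ^ 3 * v) * indicator {0<..} v * F2 (\<sigma> * v, \<mu>2 + \<sigma> * u, \<mu>2 + \<sigma> * u + \<sigma> * v * w)"]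
    by simp
  also have "\<dots> = (\<integral>\<^sup>+u. \<integral>\<^sup>+v. \<integral>\<^sup>+w. ennreal (f4 n (real n * (max \<mu>1 \<mu>2 - min \<mu>1 \<mu>2) / \<sigma>) (\<lambda>_. 1) u v w) * \<phi> ((u, v), w) \<partial>lborel \<partial>lborel \<partial>lborel)"
  proof (intro nn_integral_cong_AE)
    let ?d = "(max \<mu>1 \<mu>2 - min \<mu>1 \<mu>2) / \<sigma>"
    show "AE u in lborel. (\<integral>\<^sup>+v. \<integral>\<^sup>+w. ennreal (\<sigma> ^ 3 * v) * indicator {0<..} v * F1 (\<sigma> * v, \<mu>1 + \<sigma> * u, \<mu>1 + \<sigma> * u + \<sigma> * v * w) +
        ennreal (\<sigma> ^ 3 * v) * indicator {0<..} v * F2 (\<sigma> * v, \<mu>2 + \<sigma> * u, \<mu>2 + \<sigma> * u + \<sigma> * v * w) \<partial>lborel \<partial>lborel) =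
      (\<integral>\<^sup>+v. \<integral>\<^sup>+w. ennreal (f4 n (real n * (max \<mu>1 \<mu>2 - min \<mu>1 \<mu>2) / \<sigma>) (\<lambda>_. 1) u v w) * \<phi> ((u, v), w) \<partial>lborel \<partial>lborel)"
      using AE_lborel_singleton[of 0] AE_lborel_singleton[of ?d]
    proof eventually_elim
      case (elim u)
      show ?case
      proof (intro nn_integral_cong_AE)
        show "AE v in lborel. (\<integral>\<^sup>+w. ennreal (\<sigma> ^ 3 * v) * indicator {0<..} v * F1 (\<sigma> * v, \<mu>1 + \<sigma> * u, \<mu>1 + \<sigma> * u + \<sigma> * v * w) +
          ennreal (\<sigma> ^ 3 * v) * indicator {0<..} v * F2 (\<sigma> * v, \<mu>2 + \<sigma> * u, \<mu>2 + \<sigma> * u + \<sigma> * v * w) \<partial>lborel) =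
          (\<integral>\<^sup>+w. ennreal (f4 n (real n * (max \<mu>1 \<mu>2 - min \<mu>1 \<mu>2) / \<sigma>) (\<lambda>_. 1) u v w) * \<phi> ((u, v), w) \<partial>lborel)"
          using AE_lborel_singleton[of 0]
        proof eventually_elim
          case (elim v)
          show ?case
          proof (intro nn_integral_cong_AE)
            show "AE w in lborel. ennreal (\<sigma> ^ 3 * v) * indicator {0<..} v * F1 (\<sigma> * v, \<mu>1 + \<sigma> * u, \<mu>1 + \<sigma> * u + \<sigma> * v * w) +
              ennreal (\<sigma> ^ 3 * v) * indicator {0<..} v * F2 (\<sigma> * v, \<mu>2 + \<sigma> * u, \<mu>2 + \<sigma> * u + \<sigma> * v * w) =
              ennreal (f4 n (real n * (max \<mu>1 \<mu>2 - min \<mu>1 \<mu>2) / \<sigma>) (\<lambda>_. 1) u v w) * \<phi> ((u, v), w)"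
              using AE_lborel_singleton[of 0] AE_lborel_singleton[of "(?d - u) / v"]
            proof eventually_elim
              case (elim w)
              show ?case
                unfolding F1_def F2_def d1_def d2_def e_def prod.case
                by (rule ptw[OF s n]) (use \<open>u \<noteq> 0\<close> \<open>u \<noteq> ?d\<close> \<open>v \<noteq> 0\<close> elim in auto)
            qed
          qed
        qed
      qed
    qed
  qed
  also have "\<dots> = (\<integral>\<^sup>+z. ennreal (f4 n (real n * (max \<mu>1 \<mu>2 - min \<mu>1 \<mu>2) / \<sigma>) (\<lambda>_. 1) (fst (fst z)) (snd (fst z)) (snd z)) * \<phi> z \<partial>lborel)"
  proof -
    have m: "(\<lambda>z. ennreal (f4 n (real n * (max \<mu>1 \<mu>2 - min \<mu>1 \<mu>2) / \<sigma>) (\<lambda>_. 1) (fst (fst z)) (snd (fst z)) (snd z)) * \<phi> z) \<in> borel_measurable borel"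
    proof -
      have [measurable]: "\<phi> \<in> borel_measurable ((borel \<Otimes>\<^sub>M borel) \<Otimes>\<^sub>M borel)" by (simp add: borel_prod)
      have "(\<lambda>z. ennreal (f4 n (real n * (max \<mu>1 \<mu>2 - min \<mu>1 \<mu>2) / \<sigma>) (\<lambda>_. 1) (fst (fst z)) (snd (fst z)) (snd z)) * \<phi> z) \<in> borel_measurable ((borel \<Otimes>\<^sub>M borel) \<Otimes>\<^sub>M borel)"
        unfolding f4_def Let_def by measurable
      then show ?thesis by (simp add: borel_prod)
    qed
    show ?thesis using lborel3[OF m] by simp
  qed
  finally show ?thesis unfolding d1_def d2_def e_def .
qed

lemma sed_sexp: "\<sigma> > 0 \<Longrightarrow> shifted_exp_density m \<sigma> x = sexp m (1 / \<sigma>) x"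
  by (simp add: shifted_exp_density_def sexp_def divide_simps)

lemma distr_borel_lborel: "distr M borel f = distr M lborel f"
  unfolding distr_def by simp

lemma sum_single_prod: "(\<Sum>p\<in>{i}\<times>A. f p) = (\<Sum>j\<in>A. f (i, j))"
proof -
  have e: "{i} \<times> A = Pair i ` A" by auto
  show ?thesis unfolding e by (subst sum.reindex) (auto simp: inj_on_def)
qed

lemma img_single_prod: "g ` ({i}\<times>A) = (\<lambda>j. g (i, j)) ` A"
  by auto

lemma master:
  fixes M :: "'a measure" and X :: "nat \<Rightarrow> nat \<Rightarrow> 'a \<Rightarrow> real"
    and n :: nat and \<mu>1 \<mu>2 \<sigma> :: real and \<phi> :: "(real \<times> real) \<times> real \<Rightarrow> ennreal"
  assumes PS: "prob_space M" and n: "n \<ge> 2" and s: "\<sigma> > 0"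
    and ind: "prob_space.indep_vars M (\<lambda>_. borel) (\<lambda>(i, j). X i j) ({1, 2} \<times> {1..n})"
    and dist: "\<And>i j. i \<in> {1, 2} \<Longrightarrow> j \<in> {1..n} \<Longrightarrow>
           distributed M lborel (X i j)
             (\<lambda>x. ennreal (shifted_exp_density (if i = 1 then \<mu>1 else \<mu>2) \<sigma> x))"
    and phim[measurable]: "\<phi> \<in> borel_measurable borel"
  shows "(\<integral>\<^sup>+\<omega>. \<phi> (Hf \<mu>1 \<mu>2 \<sigma> (Min ((\<lambda>j. X 1 j \<omega>) ` {1..n})) (Min ((\<lambda>j. X 2 j \<omega>) ` {1..n}))
        ((\<Sum>j\<in>{1..n}. X 1 j \<omega> - Min ((\<lambda>j. X 1 j \<omega>) ` {1..n})) + (\<Sum>j\<in>{1..n}. X 2 j \<omega> - Min ((\<lambda>j. X 2 j \<omega>) ` {1..n})))) \<partial>M) =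
    (\<integral>\<^sup>+z. ennreal (f4 n (real n * (max \<mu>1 \<mu>2 - min \<mu>1 \<mu>2) / \<sigma>) (\<lambda>_. 1) (fst (fst z)) (snd (fst z)) (snd z)) * \<phi> z \<partial>lborel)"
proof -
  interpret P: prob_space M by (rule PS)
  define J1 where "J1 = {1::nat} \<times> {1..n}"
  define J2 where "J2 = {2::nat} \<times> {1..n}"
  define J where "J = {1::nat, 2} \<times> {1..n}"
  have JU: "J = J1 \<union> J2" and JI: "J1 \<inter> J2 = {}" unfolding J_def J1_def J2_def by auto
  have finJ[simp]: "finite J" "finite J1" "finite J2" unfolding J_def J1_def J2_def by auto
  have neJ: "J1 \<noteq> {}" "J2 \<noteq> {}" "J \<noteq> {}" unfolding J_def J1_def J2_def using n by auto
  have cardJ: "card J1 = n" "card J2 = n" unfolding J1_def J2_def by (simp_all add: card_cartesian_product)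
  define X' where "X' = (\<lambda>(i, j). X i j)"
  define Nd where "Nd = (\<lambda>i::nat. density lborel (\<lambda>x. ennreal (sexp (if i = 1 then \<mu>1 else \<mu>2) (1 / \<sigma>) x)))"
  have XM: "X' p \<in> borel_measurable M" if "p \<in> J" for p
    using distributed_measurable[OF dist, of "fst p" "snd p"] that unfolding J_def X'_def
    by (auto simp: case_prod_beta)
  have dX: "distr M borel (X' p) = Nd (fst p)" if "p \<in> J" for p
  proof -
    have "distr M lborel (X' p) = density lborel (\<lambda>x. ennreal (shifted_exp_density (if fst p = 1 then \<mu>1 else \<mu>2) \<sigma> x))"
      using distributed_distr_eq_density[OF dist, of "fst p" "snd p"] that unfolding J_def X'_def
      by (auto simp: case_prod_beta)
    then show ?thesis unfolding distr_borel_lborel Nd_def using s by (simp add: sed_sexp)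
  qed
  have PiJ: "distr M (PiM J (\<lambda>_. borel)) (\<lambda>\<omega>. \<lambda>p\<in>J. X' p \<omega>) = PiM J (\<lambda>p. Nd (fst p))"
  proof -
    have "distr M (PiM J (\<lambda>_. borel)) (\<lambda>\<omega>. \<lambda>p\<in>J. X' p \<omega>) = PiM J (\<lambda>p. distr M borel (X' p))"
      using P.indep_vars_iff_distr_eq_PiM'[where I=J and X=X' and M'="\<lambda>_. borel"] neJ XM ind unfolding X'_def J_def by auto
    also have "\<dots> = PiM J (\<lambda>p. Nd (fst p))" by (intro PiM_cong refl dX)
    finally show ?thesis .
  qed
  have setsN: "sets (PiM J (\<lambda>p. Nd (fst p))) = sets (PiM J (\<lambda>_. borel))"
    by (intro sets_PiM_cong) (auto simp: Nd_def)
  have Tm: "(\<lambda>\<omega>. \<lambda>p\<in>J. X' p \<omega>) \<in> measurable M (PiM J (\<lambda>p. Nd (fst p)))"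
    by (rule measurable_restrict) (simp add: Nd_def XM)
  have distrN: "distr M (PiM J (\<lambda>p. Nd (fst p))) (\<lambda>\<omega>. \<lambda>p\<in>J. X' p \<omega>) = PiM J (\<lambda>p. Nd (fst p))"
    using distr_cong[OF refl setsN, where f="\<lambda>\<omega>. \<lambda>p\<in>J. X' p \<omega>" and g="\<lambda>\<omega>. \<lambda>p\<in>J. X' p \<omega>"] PiJ by simp
  interpret PS: product_sigma_finite "\<lambda>p. Nd (fst p)"
    unfolding product_sigma_finite_def Nd_def using sigma_finite_sexp by blast
  define Tf where "Tf = (\<lambda>(K::(nat \<times> nat) set) (x :: nat \<times> nat \<Rightarrow> real). \<Sum>p\<in>K. x p - Min (x ` K))"
  define \<Phi> where "\<Phi> = (\<lambda>x :: nat \<times> nat \<Rightarrow> real. \<phi> (Hf \<mu>1 \<mu>2 \<sigma> (Min (x ` J1)) (Min (x ` J2)) (Tf J1 x + Tf J2 x)))"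
  have comp: "(\<lambda>x. x p) \<in> borel_measurable (PiM J (\<lambda>p. Nd (fst p)))" if "p \<in> J" for p
    using measurable_component_singleton[OF that, of "\<lambda>p. Nd (fst p)"] by (simp add: Nd_def)
  have compK: "(\<lambda>x. x p) \<in> borel_measurable (PiM J (\<lambda>p. Nd (fst p)))" if "p \<in> K" "K \<subseteq> J" for p K
    by (rule comp) (use that in blast)
  have MinK: "(\<lambda>x. Min (x ` K)) \<in> borel_measurable (PiM J (\<lambda>p. Nd (fst p)))" if "K \<subseteq> J" for K
    using borel_measurable_Min[of K "\<lambda>p x. x p", OF finite_subset[OF that finJ(1)] compK[OF _ that]] by simp
  have TfK: "Tf K \<in> borel_measurable (PiM J (\<lambda>p. Nd (fst p)))" if "K \<subseteq> J" for K
    unfolding Tf_def by (rule borel_measurable_sum, rule borel_measurable_diff[OF compK[OF _ that] MinK[OF that]])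
  have \<Phi>m: "\<Phi> \<in> borel_measurable (PiM J (\<lambda>p. Nd (fst p)))"
    unfolding \<Phi>_def using JU
    by (intro measurable_compose[OF _ phim] Hf_measurable' MinK TfK borel_measurable_add) auto
  have eq\<omega>: "\<Phi> (\<lambda>p\<in>J. X' p \<omega>) = \<phi> (Hf \<mu>1 \<mu>2 \<sigma> (Min ((\<lambda>j. X 1 j \<omega>) ` {1..n})) (Min ((\<lambda>j. X 2 j \<omega>) ` {1..n}))
        ((\<Sum>j\<in>{1..n}. X 1 j \<omega> - Min ((\<lambda>j. X 1 j \<omega>) ` {1..n})) + (\<Sum>j\<in>{1..n}. X 2 j \<omega> - Min ((\<lambda>j. X 2 j \<omega>) ` {1..n}))))" for \<omega>
  proof -
    have i1: "(\<lambda>p\<in>J. X' p \<omega>) ` J1 = (\<lambda>j. X 1 j \<omega>) ` {1..n}"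
      unfolding J1_def img_single_prod by (auto simp: J_def X'_def)
    have i2: "(\<lambda>p\<in>J. X' p \<omega>) ` J2 = (\<lambda>j. X 2 j \<omega>) ` {1..n}"
      unfolding J2_def img_single_prod by (auto simp: J_def X'_def)
    have t1: "Tf J1 (\<lambda>p\<in>J. X' p \<omega>) = (\<Sum>j\<in>{1..n}. X 1 j \<omega> - Min ((\<lambda>j. X 1 j \<omega>) ` {1..n}))"
      unfolding Tf_def i1 unfolding J1_def by (simp add: sum_single_prod J_def X'_def)
    have t2: "Tf J2 (\<lambda>p\<in>J. X' p \<omega>) = (\<Sum>j\<in>{1..n}. X 2 j \<omega> - Min ((\<lambda>j. X 2 j \<omega>) ` {1..n}))"
      unfolding Tf_def i2 unfolding J2_def by (simp add: sum_single_prod J_def X'_def)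
    show ?thesis unfolding \<Phi>_def i1 i2 t1 t2 ..
  qed
  have merge0: "merge J1 J2 (x1, x2) ` J1 = x1 ` J1" "merge J1 J2 (x1, x2) ` J2 = x2 ` J2" for x1 x2
    using JI by (auto simp: merge_def intro!: image_cong)
  have merge1: "merge J1 J2 (x1, x2) ` J1 = x1 ` J1" "merge J1 J2 (x1, x2) ` J2 = x2 ` J2"
    "Tf J1 (merge J1 J2 (x1, x2)) = Tf J1 x1" "Tf J2 (merge J1 J2 (x1, x2)) = Tf J2 x2" for x1 x2
    using JI unfolding Tf_def merge0 by (auto simp: merge_def intro!: sum.cong)
  have PiJ1: "PiM J1 (\<lambda>p. Nd (fst p)) = PiM J1 (\<lambda>_. density lborel (\<lambda>x. ennreal (sexp \<mu>1 (1 / \<sigma>) x)))"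
    by (intro PiM_cong) (auto simp: J1_def Nd_def)
  have PiJ2: "PiM J2 (\<lambda>p. Nd (fst p)) = PiM J2 (\<lambda>_. density lborel (\<lambda>x. ennreal (sexp \<mu>2 (1 / \<sigma>) x)))"
    by (intro PiM_cong) (auto simp: J2_def Nd_def)
  define G where "G = (\<lambda>(m1, t1). \<integral>\<^sup>+m2. ennreal (sexp \<mu>2 (real n * (1 / \<sigma>)) m2) *
      Tint (1 / \<sigma>) n (\<lambda>t2. \<phi> (Hf \<mu>1 \<mu>2 \<sigma> m1 m2 (t1 + t2))) \<partial>lborel)"
  have Gm: "G \<in> borel_measurable (borel \<Otimes>\<^sub>M borel)"
  proof -
    have "G = (\<lambda>(m1, t1). \<integral>\<^sup>+m2. ennreal (sexp \<mu>2 (real n * (1 / \<sigma>)) m2) *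
      (\<integral>\<^sup>+t2. ennreal (erlang_density (n - 2) (1 / \<sigma>) t2) * \<phi> (Hf \<mu>1 \<mu>2 \<sigma> m1 m2 (t1 + t2)) \<partial>lborel) \<partial>lborel)"
      unfolding G_def Tint_def using n by simp
    also have "\<dots> \<in> borel_measurable (borel \<Otimes>\<^sub>M borel)" by measurable
    finally show ?thesis .
  qed
  have "(\<integral>\<^sup>+\<omega>. \<phi> (Hf \<mu>1 \<mu>2 \<sigma> (Min ((\<lambda>j. X 1 j \<omega>) ` {1..n})) (Min ((\<lambda>j. X 2 j \<omega>) ` {1..n}))
        ((\<Sum>j\<in>{1..n}. X 1 j \<omega> - Min ((\<lambda>j. X 1 j \<omega>) ` {1..n})) + (\<Sum>j\<in>{1..n}. X 2 j \<omega> - Min ((\<lambda>j. X 2 j \<omega>) ` {1..n})))) \<partial>M) =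
     (\<integral>\<^sup>+\<omega>. \<Phi> (\<lambda>p\<in>J. X' p \<omega>) \<partial>M)"
    by (simp only: eq\<omega>)
  also have "\<dots> = (\<integral>\<^sup>+x. \<Phi> x \<partial>distr M (PiM J (\<lambda>p. Nd (fst p))) (\<lambda>\<omega>. \<lambda>p\<in>J. X' p \<omega>))"
    by (rule nn_integral_distr[symmetric, OF Tm]) (simp add: \<Phi>m)
  also have "\<dots> = (\<integral>\<^sup>+x. \<Phi> x \<partial>PiM J (\<lambda>p. Nd (fst p)))" by (simp only: distrN)
  also have "\<dots> = (\<integral>\<^sup>+x1. \<integral>\<^sup>+x2. \<Phi> (merge J1 J2 (x1, x2)) \<partial>PiM J2 (\<lambda>p. Nd (fst p)) \<partial>PiM J1 (\<lambda>p. Nd (fst p)))"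
    using PS.product_nn_integral_fold[OF JI finJ(2,3), of \<Phi>] \<Phi>m unfolding JU by simp
  also have "\<dots> = (\<integral>\<^sup>+x1. \<integral>\<^sup>+x2. \<phi> (Hf \<mu>1 \<mu>2 \<sigma> (Min (x1 ` J1)) (Min (x2 ` J2)) (Tf J1 x1 + Tf J2 x2))
        \<partial>PiM J2 (\<lambda>_. density lborel (\<lambda>x. ennreal (sexp \<mu>2 (1 / \<sigma>) x))) \<partial>PiM J1 (\<lambda>_. density lborel (\<lambda>x. ennreal (sexp \<mu>1 (1 / \<sigma>) x))))"
    unfolding PiJ1 PiJ2 \<Phi>_def merge1 ..
  also have "\<dots> = (\<integral>\<^sup>+x1. G (Min (x1 ` J1), Tf J1 x1) \<partial>PiM J1 (\<lambda>_. density lborel (\<lambda>x. ennreal (sexp \<mu>1 (1 / \<sigma>) x))))"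
  proof (intro nn_integral_cong)
    fix x1 :: "nat \<times> nat \<Rightarrow> real"
    have "(\<integral>\<^sup>+x2. (\<lambda>(m2, t2). \<phi> (Hf \<mu>1 \<mu>2 \<sigma> (Min (x1 ` J1)) m2 (Tf J1 x1 + t2))) (Min (x2 ` J2), \<Sum>p\<in>J2. x2 p - Min (x2 ` J2))
        \<partial>PiM J2 (\<lambda>_. density lborel (\<lambda>x. ennreal (sexp \<mu>2 (1 / \<sigma>) x)))) =
      (\<integral>\<^sup>+m. ennreal (sexp \<mu>2 (real (card J2) * (1 / \<sigma>)) m) * Tint (1 / \<sigma>) (card J2) (\<lambda>t. (\<lambda>(m2, t2). \<phi> (Hf \<mu>1 \<mu>2 \<sigma> (Min (x1 ` J1)) m2 (Tf J1 x1 + t2))) (m, t)) \<partial>lborel)"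
      by (rule sample_law[OF finJ(3) neJ(2)]) (use s in simp, measurable)
    then show "(\<integral>\<^sup>+x2. \<phi> (Hf \<mu>1 \<mu>2 \<sigma> (Min (x1 ` J1)) (Min (x2 ` J2)) (Tf J1 x1 + Tf J2 x2))
        \<partial>PiM J2 (\<lambda>_. density lborel (\<lambda>x. ennreal (sexp \<mu>2 (1 / \<sigma>) x)))) = G (Min (x1 ` J1), Tf J1 x1)"
      unfolding G_def Tf_def cardJ by simp
  qed
  also have "\<dots> = (\<integral>\<^sup>+m. ennreal (sexp \<mu>1 (real (card J1) * (1 / \<sigma>)) m) * Tint (1 / \<sigma>) (card J1) (\<lambda>t. G (m, t)) \<partial>lborel)"
    unfolding Tf_def by (rule sample_law[OF finJ(2) neJ(1) _ Gm]) (use s in simp)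
  also have "\<dots> = (\<integral>\<^sup>+m1. ennreal (sexp \<mu>1 (real n * (1 / \<sigma>)) m1) * Tint (1 / \<sigma>) n (\<lambda>t1.
            \<integral>\<^sup>+m2. ennreal (sexp \<mu>2 (real n * (1 / \<sigma>)) m2) * Tint (1 / \<sigma>) n (\<lambda>t2. \<phi> (Hf \<mu>1 \<mu>2 \<sigma> m1 m2 (t1 + t2))) \<partial>lborel) \<partial>lborel)"
    unfolding cardJ G_def by simp
  also have "\<dots> = (\<integral>\<^sup>+m1. \<integral>\<^sup>+m2. \<integral>\<^sup>+s. ennreal (sexp \<mu>1 (real n * (1 / \<sigma>)) m1 * sexp \<mu>2 (real n * (1 / \<sigma>)) m2 * erlang_density (2 * n - 3) (1 / \<sigma>) s) *
        \<phi> (Hf \<mu>1 \<mu>2 \<sigma> m1 m2 s) \<partial>lborel \<partial>lborel \<partial>lborel)"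
    by (rule core_S2[OF s n phim])
  also have "\<dots> = (\<integral>\<^sup>+z. ennreal (f4 n (real n * (max \<mu>1 \<mu>2 - min \<mu>1 \<mu>2) / \<sigma>) (\<lambda>_. 1) (fst (fst z)) (snd (fst z)) (snd z)) * \<phi> z \<partial>lborel)"
    by (rule core_S3[OF s n phim])
  finally show ?thesis .
qed

lemma f4_times_f1:
  "f4 n mu f1 u v w * f1 w = (if f1 w = 0 then 0 else f4 n mu (\<lambda>_. 1) u v w)"
  by (auto simp: f4_def Let_def)

theorem lemma5p2:
  fixes M :: "'a measure" and X :: "nat \<Rightarrow> nat \<Rightarrow> 'a \<Rightarrow> real"
    and n :: nat and \<mu>1 \<mu>2 \<sigma> :: real and f1 :: "real \<Rightarrow> real"
  defines "Xm \<equiv> (\<lambda>i \<omega>. Min ((\<lambda>j. X i j \<omega>) ` {1..n}))"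
  defines "S \<equiv> (\<lambda>\<omega>. \<Sum>i\<in>{1,2}. \<Sum>j\<in>{1..n}. X i j \<omega> - Xm i \<omega>)"
  defines "Z1 \<equiv> (\<lambda>\<omega>. min (Xm 1 \<omega>) (Xm 2 \<omega>))"
  defines "Z2 \<equiv> (\<lambda>\<omega>. max (Xm 1 \<omega>) (Xm 2 \<omega>))"
  defines "W \<equiv> (\<lambda>\<omega>. (Z2 \<omega> - Z1 \<omega>) / S \<omega>)"
  defines "V \<equiv> (\<lambda>\<omega>. S \<omega> / \<sigma>)"
  defines "\<mu>S \<equiv> (\<lambda>\<omega>. (if Xm 1 \<omega> \<le> Xm 2 \<omega> then \<mu>1 else 0) + (if Xm 2 \<omega> < Xm 1 \<omega> then \<mu>2 else 0))"
  defines "U1 \<equiv> (\<lambda>\<omega>. (Z1 \<omega> - \<mu>S \<omega>) / \<sigma>)"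
  defines "\<mu> \<equiv> real n * (max \<mu>1 \<mu>2 - min \<mu>1 \<mu>2) / \<sigma>"
  assumes "prob_space M"
    and "n \<ge> 2"
    and "\<sigma> > 0"
    and "prob_space.indep_vars M (\<lambda>_. borel) (\<lambda>(i, j). X i j) ({1, 2} \<times> {1..n})"
    and "\<And>i j. i \<in> {1, 2} \<Longrightarrow> j \<in> {1..n} \<Longrightarrow>
           distributed M lborel (X i j)
             (\<lambda>x. ennreal (shifted_exp_density (if i = 1 then \<mu>1 else \<mu>2) \<sigma> x))"
    and "\<And>w. f1 w \<ge> 0"
    and "distributed M lborel W (\<lambda>w. ennreal (f1 w))"
  shows "conditional_density M (\<lambda>\<omega>. (U1 \<omega>, V \<omega>)) W f1
           (\<lambda>(u, v) w. f4 n \<mu> f1 u v w)"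
proof -
  note PS = assms(10) and n = assms(11) and s = assms(12) and ind = assms(13) and dist = assms(14)
    and f1pos = assms(15) and distW = assms(16)
  interpret P: prob_space M by (rule PS)
  define F where "F = (\<lambda>\<omega>. ((U1 \<omega>, V \<omega>), W \<omega>))"
  define f4' where "f4' = (\<lambda>z::(real \<times> real) \<times> real. f4 n \<mu> (\<lambda>_. 1) (fst (fst z)) (snd (fst z)) (snd z))"
  have XM: "X i j \<in> borel_measurable M" if "i \<in> {1, 2}" "j \<in> {1..n}" for i j
    using distributed_measurable[OF dist[OF that]] by simp
  have XmM: "Xm i \<in> borel_measurable M" if "i \<in> {1, 2}" for i
    unfolding Xm_def by (rule borel_measurable_Min) (auto intro: XM[OF that])
  have SM: "S \<in> borel_measurable M"
    unfolding S_def
    by (intro borel_measurable_sum borel_measurable_diff XM XmM) auto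
  have Feq: "F \<omega> = Hf \<mu>1 \<mu>2 \<sigma> (Min ((\<lambda>j. X 1 j \<omega>) ` {1..n})) (Min ((\<lambda>j. X 2 j \<omega>) ` {1..n}))
        ((\<Sum>j\<in>{1..n}. X 1 j \<omega> - Min ((\<lambda>j. X 1 j \<omega>) ` {1..n})) + (\<Sum>j\<in>{1..n}. X 2 j \<omega> - Min ((\<lambda>j. X 2 j \<omega>) ` {1..n})))" for \<omega>
    unfolding F_def Hf_def U1_def V_def W_def Z1_def Z2_def \<mu>S_def S_def Xm_def by simp
  have FM: "F \<in> borel_measurable M"
  proof -
    have "(\<lambda>\<omega>. Hf \<mu>1 \<mu>2 \<sigma> (Xm 1 \<omega>) (Xm 2 \<omega>) (S \<omega>)) \<in> borel_measurable M"
      by (intro Hf_measurable' XmM SM) auto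
    moreover have "F = (\<lambda>\<omega>. Hf \<mu>1 \<mu>2 \<sigma> (Xm 1 \<omega>) (Xm 2 \<omega>) (S \<omega>))"
      unfolding F_def Hf_def U1_def V_def W_def Z1_def Z2_def \<mu>S_def by (simp add: fun_eq_iff)
    ultimately show ?thesis by simp
  qed
  have masterF: "(\<integral>\<^sup>+\<omega>. \<phi> (F \<omega>) \<partial>M) = (\<integral>\<^sup>+z. ennreal (f4' z) * \<phi> z \<partial>lborel)"
    if [measurable]: "\<phi> \<in> borel_measurable borel" for \<phi>
    unfolding Feq f4'_def \<mu>_def by (rule master[OF PS n s ind dist that])
  have f1M[measurable]: "f1 \<in> borel_measurable borel"
    using distributed_borel_measurable[OF distW] f1pos by simp
  have WM: "W \<in> borel_measurable M" using distributed_measurable[OF distW] by simp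
  define dens where "dens = (\<lambda>(y, w). ennreal ((\<lambda>(u, v) w. f4 n \<mu> f1 u v w) y w * f1 w))"
  have dens_eq: "dens z = ennreal (f4' z) * indicator {z. f1 (snd z) \<noteq> 0} z" for z
    unfolding dens_def f4'_def by (cases z) (auto simp: f4_times_f1 split: split_indicator)
  have f4'M: "(\<lambda>z. ennreal (f4' z)) \<in> borel_measurable borel"
  proof -
    have "(\<lambda>z. ennreal (f4' z)) \<in> borel_measurable ((borel \<Otimes>\<^sub>M borel) \<Otimes>\<^sub>M borel)"
      unfolding f4'_def f4_def Let_def by measurable
    then show ?thesis by (simp add: borel_prod)
  qed
  have ZM: "{z::(real \<times> real) \<times> real. f1 (snd z) \<noteq> 0} \<in> sets borel"
  proof -
    have "Measurable.pred ((borel \<Otimes>\<^sub>M borel) \<Otimes>\<^sub>M borel) (\<lambda>z::(real \<times> real) \<times> real. f1 (snd z) \<noteq> 0)"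
      by measurable
    then show ?thesis by (simp add: borel_prod pred_def)
  qed
  have ZM': "{z::(real \<times> real) \<times> real. f1 (snd z) = 0} \<in> sets borel"
  proof -
    have "Measurable.pred ((borel \<Otimes>\<^sub>M borel) \<Otimes>\<^sub>M borel) (\<lambda>z::(real \<times> real) \<times> real. f1 (snd z) = 0)"
      by measurable
    then show ?thesis by (simp add: borel_prod pred_def)
  qed
  have densM: "dens \<in> borel_measurable lborel"
    unfolding dens_eq[abs_def] using f4'M ZM by simp
  have zero: "(\<integral>\<^sup>+z. ennreal (f4' z) * indicator {z. f1 (snd z) = 0} z \<partial>lborel) = 0"
  proof -
    have "(\<integral>\<^sup>+z. ennreal (f4' z) * indicator {z. f1 (snd z) = 0} z \<partial>lborel) =
        (\<integral>\<^sup>+\<omega>. indicator {z. f1 (snd z) = 0} (F \<omega>) \<partial>M)"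
      by (rule masterF[symmetric]) (use ZM' in simp)
    also have "\<dots> = (\<integral>\<^sup>+\<omega>. indicator {w. f1 w = 0} (W \<omega>) \<partial>M)"
      unfolding F_def by (intro nn_integral_cong) (simp split: split_indicator)
    also have "\<dots> = (\<integral>\<^sup>+w. indicator {w. f1 w = 0} w \<partial>distr M lborel W)"
      by (rule nn_integral_distr[symmetric]) (use WM in simp_all)
    also have "\<dots> = (\<integral>\<^sup>+w. indicator {w. f1 w = 0} w \<partial>density lborel (\<lambda>w. ennreal (f1 w)))"
      using distributed_distr_eq_density[OF distW] by simp
    also have "\<dots> = (\<integral>\<^sup>+w. ennreal (f1 w) * indicator {w. f1 w = 0} w \<partial>lborel)"
      by (rule nn_integral_density) simp_all
    also have "\<dots> = (\<integral>\<^sup>+(w::real). 0 \<partial>lborel)"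
      by (rule nn_integral_cong) (simp split: split_indicator)
    also have "\<dots> = 0" by simp
    finally show ?thesis .
  qed
  have distr_eq: "distr M lborel F = density lborel dens"
  proof (rule measure_eqI)
    show "sets (distr M lborel F) = sets (density lborel dens)" by simp
  next
    fix A assume "A \<in> sets (distr M lborel F)"
    then have A[measurable]: "A \<in> sets borel" by simp
    have "emeasure (distr M lborel F) A = (\<integral>\<^sup>+z. indicator A z \<partial>distr M lborel F)"
      using A by simp
    also have "\<dots> = (\<integral>\<^sup>+\<omega>. indicator A (F \<omega>) \<partial>M)"
      by (rule nn_integral_distr) (use FM in simp_all)
    also have "\<dots> = (\<integral>\<^sup>+z. ennreal (f4' z) * indicator A z \<partial>lborel)"
      by (rule masterF) simp
    also have "\<dots> = (\<integral>\<^sup>+z. ennreal (f4' z) * indicator A z * indicator {z. f1 (snd z) \<noteq> 0} z +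
        ennreal (f4' z) * indicator A z * indicator {z. f1 (snd z) = 0} z \<partial>lborel)"
      by (intro nn_integral_cong) (simp split: split_indicator)
    also have "\<dots> = (\<integral>\<^sup>+z. ennreal (f4' z) * indicator A z * indicator {z. f1 (snd z) \<noteq> 0} z \<partial>lborel) +
        (\<integral>\<^sup>+z. ennreal (f4' z) * indicator A z * indicator {z. f1 (snd z) = 0} z \<partial>lborel)"
    proof (rule nn_integral_add)
      show "(\<lambda>z. ennreal (f4' z) * indicator A z * indicator {z. f1 (snd z) \<noteq> 0} z) \<in> borel_measurable lborel"
        using f4'M ZM by simp
      show "(\<lambda>z. ennreal (f4' z) * indicator A z * indicator {z. f1 (snd z) = 0} z) \<in> borel_measurable lborel"
        using f4'M ZM' by simp
    qed
    also have "(\<integral>\<^sup>+z. ennreal (f4' z) * indicator A z * indicator {z. f1 (snd z) = 0} z \<partial>lborel) = 0"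
    proof -
      have "(\<integral>\<^sup>+z. ennreal (f4' z) * indicator A z * indicator {z. f1 (snd z) = 0} z \<partial>lborel) \<le>
          (\<integral>\<^sup>+z. ennreal (f4' z) * indicator {z. f1 (snd z) = 0} z \<partial>lborel)"
        by (intro nn_integral_mono) (simp split: split_indicator)
      then show ?thesis using zero by simp
    qed
    also have "(\<integral>\<^sup>+z. ennreal (f4' z) * indicator A z * indicator {z. f1 (snd z) \<noteq> 0} z \<partial>lborel) =
        (\<integral>\<^sup>+z. dens z * indicator A z \<partial>lborel)"
      by (intro nn_integral_cong) (simp add: dens_eq mult_ac)
    also have "\<dots> = emeasure (density lborel dens) A"
      by (rule emeasure_density[symmetric]) (use densM A in simp_all)
    finally show "emeasure (distr M lborel F) A = emeasure (density lborel dens) A" by simp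
  qed
  show ?thesis
    unfolding conditional_density_def distributed_def
  proof (intro conjI)
    show "distr M lborel (\<lambda>\<omega>. ((U1 \<omega>, V \<omega>), W \<omega>)) =
      density lborel (\<lambda>(y, w). ennreal ((\<lambda>(u, v) w. f4 n \<mu> f1 u v w) y w * f1 w))"
      using distr_eq unfolding F_def dens_def .
    show "(\<lambda>(y, w). ennreal ((\<lambda>(u, v) w. f4 n \<mu> f1 u v w) y w * f1 w)) \<in> borel_measurable lborel"
      using densM unfolding dens_def .
    show "(\<lambda>\<omega>. ((U1 \<omega>, V \<omega>), W \<omega>)) \<in> M \<rightarrow>\<^sub>M lborel"
      using FM unfolding F_def by simp
  qed
qed

end
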